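(* Let $\mathcal M$ be an $\aleph_1$-saturated structure. Then $\mathcal M$ is unstable if and only if $\mathcal M$ trace defines $(\mathbb Q,<)$, and $\mathcal M$ has the independence property (IP, i.e. is not NIP) if and only if $\mathcal M$ trace defines the random graph.
   Context: The random graph is the Fraïssé limit of the class of finite symmetric irreflexive graphs, viewed as a structure $(V,E)$ with one binary relation. "Definable" means definable with parameters. For structures $\mathcal M,\mathcal O$ and an injection $\tau:O\to M^m$, $\mathcal M$ trace defines $\mathcal O$ via $\tau$ if for every $n$ and every $\mathcal O$-definable $X\subseteq O^n$ there is an $\mathcal M$-definable $Y\subseteq M^{mn}$ with $X=\{(a_1,\dots,a_n)\in O^n:(\tau(a_1),\dots,\tau(a_n))\in Y\}$; $\mathcal M$ trace defines $\mathcal O$ if it does so via some injection $\tau:O\to M^m$ for some $m$. *)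

theory Defs
  imports Main "HOL-Library.Countable_Set"
begin

datatype 'f trm = Var nat | Fn 'f "'f trm list"

datatype ('f, 'r) fm =
    FF
  | Eq "'f trm" "'f trm"
  | Rel 'r "'f trm list"
  | Neg "('f, 'r) fm"
  | Conj "('f, 'r) fm" "('f, 'r) fm"
  | Ex nat "('f, 'r) fm"

text \<open>A structure with universe the whole type 'a, a signature given by sets of
  function and relation symbols with arities, and their interpretations.\<close>
record ('a, 'f, 'r) struc =
  fsyms   :: "'f set"
  farity  :: "'f \<Rightarrow> nat"
  finterp :: "'f \<Rightarrow> 'a list \<Rightarrow> 'a"
  rsyms   :: "'r set"
  rarity  :: "'r \<Rightarrow> nat"
  rinterp :: "'r \<Rightarrow> 'a list \<Rightarrow> bool"

fun wf_trm :: "('a, 'f, 'r, 'z) struc_scheme \<Rightarrow> 'f trm \<Rightarrow> bool" where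
  "wf_trm S (Var n) = True"
| "wf_trm S (Fn f ts) =
     (f \<in> fsyms S \<and> length ts = farity S f \<and> (\<forall>t\<in>set ts. wf_trm S t))"

fun eval_trm :: "('a, 'f, 'r, 'z) struc_scheme \<Rightarrow> (nat \<Rightarrow> 'a) \<Rightarrow> 'f trm \<Rightarrow> 'a" where
  "eval_trm S v (Var n) = v n"
| "eval_trm S v (Fn f ts) = finterp S f (map (eval_trm S v) ts)"

fun fv_trm :: "'f trm \<Rightarrow> nat set" where
  "fv_trm (Var n) = {n}"
| "fv_trm (Fn f ts) = (\<Union>t\<in>set ts. fv_trm t)"

fun wf_fm :: "('a, 'f, 'r, 'z) struc_scheme \<Rightarrow> ('f, 'r) fm \<Rightarrow> bool" where
  "wf_fm S FF = True"
| "wf_fm S (Eq t u) = (wf_trm S t \<and> wf_trm S u)"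
| "wf_fm S (Rel r ts) =
     (r \<in> rsyms S \<and> length ts = rarity S r \<and> (\<forall>t\<in>set ts. wf_trm S t))"
| "wf_fm S (Neg \<phi>) = wf_fm S \<phi>"
| "wf_fm S (Conj \<phi> \<psi>) = (wf_fm S \<phi> \<and> wf_fm S \<psi>)"
| "wf_fm S (Ex x \<phi>) = wf_fm S \<phi>"

fun fv :: "('f, 'r) fm \<Rightarrow> nat set" where
  "fv FF = {}"
| "fv (Eq t u) = fv_trm t \<union> fv_trm u"
| "fv (Rel r ts) = (\<Union>t\<in>set ts. fv_trm t)"
| "fv (Neg \<phi>) = fv \<phi>"
| "fv (Conj \<phi> \<psi>) = fv \<phi> \<union> fv \<psi>"
| "fv (Ex x \<phi>) = fv \<phi> - {x}"

fun sat :: "('a, 'f, 'r, 'z) struc_scheme \<Rightarrow> (nat \<Rightarrow> 'a) \<Rightarrow> ('f, 'r) fm \<Rightarrow> bool" where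
  "sat S v FF = False"
| "sat S v (Eq t u) = (eval_trm S v t = eval_trm S v u)"
| "sat S v (Rel r ts) = rinterp S r (map (eval_trm S v) ts)"
| "sat S v (Neg \<phi>) = (\<not> sat S v \<phi>)"
| "sat S v (Conj \<phi> \<psi>) = (sat S v \<phi> \<and> sat S v \<psi>)"
| "sat S v (Ex x \<phi>) = (\<exists>a. sat S (v(x := a)) \<phi>)"

definition asg :: "'a list \<Rightarrow> (nat \<Rightarrow> 'a) \<Rightarrow> nat \<Rightarrow> 'a" where
  "asg xs v = (\<lambda>i. if i < length xs then xs ! i else v i)"

text \<open>X \<subseteq> M^n (n-tuples as lists of length n) is definable with parameters:
  there is a formula \<phi>(x_0..x_{n-1}, y...) and parameters v for the remaining variables.\<close>
definition definable :: "('a, 'f, 'r, 'z) struc_scheme \<Rightarrow> nat \<Rightarrow> 'a list set \<Rightarrow> bool" where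
  "definable S n X \<longleftrightarrow>
     (\<exists>\<phi> v. wf_fm S \<phi> \<and> X = {xs. length xs = n \<and> sat S (asg xs v) \<phi>})"

definition trace_defines_via ::
  "('a, 'f, 'r, 'z) struc_scheme \<Rightarrow> ('b, 'g, 's, 'y) struc_scheme \<Rightarrow> nat \<Rightarrow> ('b \<Rightarrow> 'a list) \<Rightarrow> bool" where
  "trace_defines_via M Ost m \<tau> \<longleftrightarrow>
     inj \<tau> \<and> (\<forall>b. length (\<tau> b) = m) \<and>
     (\<forall>n X. definable Ost n X \<longrightarrow>
        (\<exists>Y. definable M (m * n) Y \<and>
             X = {bs. length bs = n \<and> concat (map \<tau> bs) \<in> Y}))"

definition trace_defines ::
  "('a, 'f, 'r, 'z) struc_scheme \<Rightarrow> ('b, 'g, 's, 'y) struc_scheme \<Rightarrow> bool" where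
  "trace_defines M Ost \<longleftrightarrow> (\<exists>m \<tau>. trace_defines_via M Ost m \<tau>)"

definition stable :: "('a, 'f, 'r, 'z) struc_scheme \<Rightarrow> bool" where
  "stable M \<longleftrightarrow> \<not> (\<exists>\<phi> p q. wf_fm M \<phi> \<and> fv \<phi> \<subseteq> {..<p+q} \<and>
      (\<forall>N. \<exists>(a :: nat \<Rightarrow> 'a list) (b :: nat \<Rightarrow> 'a list).
          (\<forall>i. length (a i) = p \<and> length (b i) = q) \<and>
          (\<forall>i<N. \<forall>j<N. sat M (asg (a i @ b j) (\<lambda>_. undefined)) \<phi> \<longleftrightarrow> i < j)))"

definition has_IP :: "('a, 'f, 'r, 'z) struc_scheme \<Rightarrow> bool" where
  "has_IP M \<longleftrightarrow> (\<exists>\<phi> p q. wf_fm M \<phi> \<and> fv \<phi> \<subseteq> {..<p+q} \<and>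
      (\<forall>N. \<exists>(a :: nat \<Rightarrow> 'a list) (b :: nat set \<Rightarrow> 'a list).
          (\<forall>i. length (a i) = p) \<and> (\<forall>S. length (b S) = q) \<and>
          (\<forall>i<N. \<forall>S. S \<subseteq> {..<N} \<longrightarrow>
               (sat M (asg (a i @ b S) (\<lambda>_. undefined)) \<phi> \<longleftrightarrow> i \<in> S))))"

definition aleph1_saturated :: "('a, 'f, 'r, 'z) struc_scheme \<Rightarrow> bool" where
  "aleph1_saturated M \<longleftrightarrow>
     (\<forall>(A :: 'a set) (\<Phi> :: (('f, 'r) fm \<times> (nat \<Rightarrow> 'a)) set).
        countable A \<longrightarrow>
        (\<forall>(\<phi>, w) \<in> \<Phi>. wf_fm M \<phi> \<and> (\<forall>i. i \<noteq> 0 \<longrightarrow> w i \<in> A)) \<longrightarrow>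
        (\<forall>F. F \<subseteq> \<Phi> \<longrightarrow> finite F \<longrightarrow> (\<exists>c. \<forall>(\<phi>, w) \<in> F. sat M (w(0 := c)) \<phi>)) \<longrightarrow>
        (\<exists>c. \<forall>(\<phi>, w) \<in> \<Phi>. sat M (w(0 := c)) \<phi>))"

definition rat_order :: "(rat, unit, unit) struc" where
  "rat_order = \<lparr> fsyms = {}, farity = (\<lambda>_. 0), finterp = (\<lambda>_ _. 0),
                 rsyms = {()}, rarity = (\<lambda>_. 2), rinterp = (\<lambda>_ xs. xs ! 0 < xs ! 1) \<rparr>"

definition graph_struc :: "(nat \<Rightarrow> nat \<Rightarrow> bool) \<Rightarrow> (nat, unit, unit) struc" where
  "graph_struc E = \<lparr> fsyms = {}, farity = (\<lambda>_. 0), finterp = (\<lambda>_ _. 0),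
                     rsyms = {()}, rarity = (\<lambda>_. 2), rinterp = (\<lambda>_ xs. E (xs ! 0) (xs ! 1)) \<rparr>"

text \<open>E is (a copy on the countable set nat of) the Fraisse limit of the class of finite
  symmetric irreflexive graphs: a countable symmetric irreflexive graph whose age
  contains every finite such graph, and which is ultrahomogeneous.\<close>
definition is_random_graph :: "(nat \<Rightarrow> nat \<Rightarrow> bool) \<Rightarrow> bool" where
  "is_random_graph E \<longleftrightarrow>
     (\<forall>x y. E x y \<longrightarrow> E y x) \<and> (\<forall>x. \<not> E x x) \<and>
     (\<forall>(S :: nat set) G. finite S \<longrightarrow>
        (\<forall>x\<in>S. \<forall>y\<in>S. G x y \<longrightarrow> G y x) \<longrightarrow> (\<forall>x\<in>S. \<not> G x x) \<longrightarrow>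
        (\<exists>f. inj_on f S \<and> (\<forall>x\<in>S. \<forall>y\<in>S. G x y \<longleftrightarrow> E (f x) (f y)))) \<and>
     (\<forall>A f. finite A \<longrightarrow> inj_on f A \<longrightarrow> (\<forall>x\<in>A. \<forall>y\<in>A. E x y \<longleftrightarrow> E (f x) (f y)) \<longrightarrow>
        (\<exists>g. bij g \<and> (\<forall>x y. E x y \<longleftrightarrow> E (g x) (g y)) \<and> (\<forall>x\<in>A. g x = f x)))"

end

theory Submission
  imports Defs
begin

lemma eval_trm_cong: "(\<And>i. i \<in> fv_trm t \<Longrightarrow> v i = w i) \<Longrightarrow> eval_trm S v t = eval_trm S w t"
proof (induction t)
  case (Fn g ts)
  have "map (eval_trm S v) ts = map (eval_trm S w) ts"
  proof (rule map_cong)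
    fix x assume x: "x \<in> set ts"
    show "eval_trm S v x = eval_trm S w x"
      by (rule Fn.IH[OF x]) (use Fn.prems x in force)
  qed simp
  then show ?case by (simp only: eval_trm.simps)
qed simp

lemma sat_cong: "(\<And>i. i \<in> fv \<phi> \<Longrightarrow> v i = w i) \<Longrightarrow> sat S v \<phi> = sat S w \<phi>"
proof (induction \<phi> arbitrary: v w)
  case (Eq t u) then show ?case using eval_trm_cong[of t v w S] eval_trm_cong[of u v w S] by auto
next
  case (Rel r ts)
  have "map (eval_trm S v) ts = map (eval_trm S w) ts"
  proof (rule map_cong)
    fix x assume x: "x \<in> set ts"
    show "eval_trm S v x = eval_trm S w x"
      by (rule eval_trm_cong) (use Rel.prems x in force)
  qed simp
  then show ?case by (simp only: sat.simps)
next
  case (Ex x \<phi>)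
  have "\<And>a. sat S (v(x:=a)) \<phi> = sat S (w(x:=a)) \<phi>" 
    by (rule Ex.IH) (use Ex.prems in auto)
  then show ?case by simp
next
  case (Neg \<phi>)
  have "sat S v \<phi> = sat S w \<phi>" by (rule Neg.IH) (use Neg.prems in auto)
  then show ?case by simp
next
  case (Conj \<phi> \<psi>)
  have "sat S v \<phi> = sat S w \<phi>" by (rule Conj.IH(1)) (use Conj.prems in auto)
  moreover have "sat S v \<psi> = sat S w \<psi>" by (rule Conj.IH(2)) (use Conj.prems in auto)
  ultimately show ?case by simp
qed simp_all

lemma finite_fv_trm: "finite (fv_trm t)"
  by (induction t) auto
lemma finite_fv: "finite (fv \<phi>)"
  by (induction \<phi>) (auto simp: finite_fv_trm)

fun rtrm :: "(nat \<Rightarrow> nat) \<Rightarrow> 'f trm \<Rightarrow> 'f trm" where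
  "rtrm f (Var n) = Var (f n)"
| "rtrm f (Fn g ts) = Fn g (map (rtrm f) ts)"

fun rfm :: "(nat \<Rightarrow> nat) \<Rightarrow> ('f,'r) fm \<Rightarrow> ('f,'r) fm" where
  "rfm f FF = FF"
| "rfm f (Eq t u) = Eq (rtrm f t) (rtrm f u)"
| "rfm f (Rel r ts) = Rel r (map (rtrm f) ts)"
| "rfm f (Neg \<phi>) = Neg (rfm f \<phi>)"
| "rfm f (Conj \<phi> \<psi>) = Conj (rfm f \<phi>) (rfm f \<psi>)"
| "rfm f (Ex x \<phi>) = Ex (f x) (rfm f \<phi>)"

lemma eval_rtrm: "eval_trm S v (rtrm f t) = eval_trm S (v \<circ> f) t"
proof (induction t)
  case (Fn g ts)
  have "map (eval_trm S v \<circ> rtrm f) ts = map (eval_trm S (v \<circ> f)) ts"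
    by (rule map_cong) (use Fn in \<open>auto simp: comp_def\<close>)
  then show ?case by (simp only: eval_trm.simps rtrm.simps map_map)
qed simp
lemma fv_rtrm: "fv_trm (rtrm f t) = f ` fv_trm t"
  by (induction t) auto
lemma wf_rtrm: "wf_trm S (rtrm f t) = wf_trm S t"
  by (induction t) auto

lemma sat_rfm: "inj f \<Longrightarrow> sat S v (rfm f \<phi>) = sat S (v \<circ> f) \<phi>"
proof (induction \<phi> arbitrary: v)
  case (Rel r ts) then show ?case by (simp add: eval_rtrm comp_def)
next
  case (Ex x \<phi>)
  have eqf: "\<And>a. (v(f x := a)) \<circ> f = (v \<circ> f)(x := a)"
    using Ex.prems by (auto simp: fun_eq_iff inj_eq)
  have "sat S v (rfm f (Ex x \<phi>)) = (\<exists>a. sat S (v(f x := a)) (rfm f \<phi>))" by simp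
  also have "\<dots> = (\<exists>a. sat S ((v(f x := a)) \<circ> f) \<phi>)" using Ex.IH Ex.prems by blast
  also have "\<dots> = (\<exists>a. sat S ((v \<circ> f)(x := a)) \<phi>)" using eqf by simp
  finally show ?case by (simp only: sat.simps rfm.simps)
qed (auto simp: eval_rtrm)

lemma fv_rfm: "inj f \<Longrightarrow> fv (rfm f \<phi>) = f ` fv \<phi>"
  by (induction \<phi>) (simp_all add: fv_rtrm image_Un image_UN image_set_diff)

lemma wf_rfm: "wf_fm S (rfm f \<phi>) = wf_fm S \<phi>"
  by (induction \<phi>) (auto simp: wf_rtrm)

primrec exs :: "nat \<Rightarrow> nat \<Rightarrow> ('f,'r) fm \<Rightarrow> ('f,'r) fm" where
  "exs H 0 \<theta> = \<theta>"
| "exs H (Suc k) \<theta> = exs H k (Ex (H+k) \<theta>)"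

definition upd :: "nat \<Rightarrow> 'a list \<Rightarrow> (nat \<Rightarrow> 'a) \<Rightarrow> nat \<Rightarrow> 'a" where
  "upd H us w = (\<lambda>i. if H \<le> i \<and> i < H + length us then us ! (i - H) else w i)"

lemma sat_exs: "sat S w (exs H k \<theta>) \<longleftrightarrow> (\<exists>us. length us = k \<and> sat S (upd H us w) \<theta>)"
proof (induction k arbitrary: \<theta>)
  case 0
  have "upd H [] w = w" by (auto simp: upd_def fun_eq_iff)
  then show ?case by auto
next
  case (Suc k)
  have eq: "(upd H us w)(H + k := a) = upd H (us @ [a]) w" if "length us = k" for us a
    using that by (auto simp: upd_def fun_eq_iff nth_append)
  show ?case
  proof
    assume "sat S w (exs H (Suc k) \<theta>)"
    then obtain us a where "length us = k" "sat S ((upd H us w)(H + k := a)) \<theta>"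
      using Suc by auto
    then show "\<exists>us. length us = Suc k \<and> sat S (upd H us w) \<theta>"
      using eq by (intro exI[of _ "us @ [a]"]) auto
  next
    assume "\<exists>us. length us = Suc k \<and> sat S (upd H us w) \<theta>"
    then obtain us where us: "length us = Suc k" "sat S (upd H us w) \<theta>" by blast
    then obtain vs a where "us = vs @ [a]" by (metis append_butlast_last_id length_0_conv nat.distinct(1))
    moreover have "length vs = k" using us \<open>us = vs @ [a]\<close> by simp
    ultimately have "sat S ((upd H vs w)(H + k := a)) \<theta>" using us eq[of vs a] by simp
    then have "\<exists>us. length us = k \<and> sat S (upd H us w) (Ex (H+k) \<theta>)"
      using \<open>length vs = k\<close> by auto
    then show "sat S w (exs H (Suc k) \<theta>)" using Suc by simp
  qed
qed

lemma fv_exs: "fv (exs H k \<theta>) = fv \<theta> - {H..<H+k}"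
  by (induction k arbitrary: \<theta>) auto

lemma wf_exs: "wf_fm S (exs H k \<theta>) = wf_fm S \<theta>"
  by (induction k arbitrary: \<theta>) auto

definition conjs :: "('f,'r) fm list \<Rightarrow> ('f,'r) fm" where
  "conjs \<phi>s = foldr Conj \<phi>s (Neg FF)"

lemma sat_conjs: "sat S v (conjs \<phi>s) \<longleftrightarrow> (\<forall>\<phi>\<in>set \<phi>s. sat S v \<phi>)"
  by (induction \<phi>s) (auto simp: conjs_def)
lemma fv_conjs: "fv (conjs \<phi>s) = (\<Union>\<phi>\<in>set \<phi>s. fv \<phi>)"
  by (induction \<phi>s) (auto simp: conjs_def)
lemma wf_conjs: "wf_fm S (conjs \<phi>s) = (\<forall>\<phi>\<in>set \<phi>s. wf_fm S \<phi>)"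
  by (induction \<phi>s) (auto simp: conjs_def)


definition dfn0 :: "('a, 'f, 'r, 'z) struc_scheme \<Rightarrow> nat \<Rightarrow> 'a list set \<Rightarrow> bool" where
  "dfn0 S n X \<longleftrightarrow> (\<exists>\<phi>. wf_fm S \<phi> \<and> fv \<phi> \<subseteq> {..<n} \<and>
      X = {xs. length xs = n \<and> sat S (asg xs (\<lambda>_. undefined)) \<phi>})"

lemma asg_cong: "length xs = n \<Longrightarrow> fv \<phi> \<subseteq> {..<n} \<Longrightarrow> sat S (asg xs v) \<phi> = sat S (asg xs w) \<phi>"
  by (rule sat_cong) (auto simp: asg_def)

lemma dfn0_len: "dfn0 S n X \<Longrightarrow> xs \<in> X \<Longrightarrow> length xs = n"
  unfolding dfn0_def by auto

lemma dfn0_formula: "wf_fm S \<phi> \<Longrightarrow> fv \<phi> \<subseteq> {..<n} \<Longrightarrow>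
   dfn0 S n {xs. length xs = n \<and> sat S (asg xs v) \<phi>}"
proof -
  assume a: "wf_fm S \<phi>" "fv \<phi> \<subseteq> {..<n}"
  have "\<And>xs. length xs = n \<Longrightarrow> sat S (asg xs v) \<phi> = sat S (asg xs (\<lambda>_. undefined)) \<phi>"
    using asg_cong[OF _ a(2)] by blast
  then show ?thesis unfolding dfn0_def using a by (intro exI[of _ \<phi>]) auto
qed

lemma dfn0_empty: "dfn0 S n {}"
  unfolding dfn0_def by (rule exI[of _ FF]) auto

lemma dfn0_all: "dfn0 S n {xs. length xs = n}"
  unfolding dfn0_def by (rule exI[of _ "Neg FF"]) auto

lemma dfn0_compl: "dfn0 S n X \<Longrightarrow> dfn0 S n {xs. length xs = n \<and> xs \<notin> X}"
  unfolding dfn0_def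
proof (elim exE conjE)
  fix \<phi> assume h: "wf_fm S \<phi>" "fv \<phi> \<subseteq> {..<n}"
    "X = {xs. length xs = n \<and> sat S (asg xs (\<lambda>_. undefined)) \<phi>}"
  show "\<exists>\<psi>. wf_fm S \<psi> \<and> fv \<psi> \<subseteq> {..<n} \<and>
      {xs. length xs = n \<and> xs \<notin> X} = {xs. length xs = n \<and> sat S (asg xs (\<lambda>_. undefined)) \<psi>}"
    by (rule exI[of _ "Neg \<phi>"]) (use h in auto)
qed

lemma dfn0_Int: "dfn0 S n X \<Longrightarrow> dfn0 S n Y \<Longrightarrow> dfn0 S n (X \<inter> Y)"
  unfolding dfn0_def
proof (elim exE conjE)
  fix \<phi> \<psi> assume h: "wf_fm S \<phi>" "fv \<phi> \<subseteq> {..<n}"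
    "X = {xs. length xs = n \<and> sat S (asg xs (\<lambda>_. undefined)) \<phi>}"
    "wf_fm S \<psi>" "fv \<psi> \<subseteq> {..<n}"
    "Y = {xs. length xs = n \<and> sat S (asg xs (\<lambda>_. undefined)) \<psi>}"
  show "\<exists>\<chi>. wf_fm S \<chi> \<and> fv \<chi> \<subseteq> {..<n} \<and>
      X \<inter> Y = {xs. length xs = n \<and> sat S (asg xs (\<lambda>_. undefined)) \<chi>}"
    by (rule exI[of _ "Conj \<phi> \<psi>"]) (use h in auto)
qed

lemma dfn0_Un: "dfn0 S n X \<Longrightarrow> dfn0 S n Y \<Longrightarrow> dfn0 S n (X \<union> Y)"
proof -
  assume a: "dfn0 S n X" "dfn0 S n Y"
  have "X \<union> Y = {xs. length xs = n \<and> xs \<notin> {xs. length xs = n \<and> xs \<notin> X} \<inter> {xs. length xs = n \<and> xs \<notin> Y}}"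
    using dfn0_len[OF a(1)] dfn0_len[OF a(2)] by auto
  then show ?thesis using a by (simp only:) (intro dfn0_compl dfn0_Int)
qed

lemma dfn0_INT: "finite I \<Longrightarrow> (\<And>i. i \<in> I \<Longrightarrow> dfn0 S n (X i)) \<Longrightarrow>
   dfn0 S n ({xs. length xs = n} \<inter> (\<Inter>i\<in>I. X i))"
proof (induction I rule: finite_induct)
  case empty then show ?case using dfn0_all by simp
next
  case (insert i I)
  have "{xs. length xs = n} \<inter> (\<Inter>j\<in>insert i I. X j) = X i \<inter> ({xs. length xs = n} \<inter> (\<Inter>j\<in>I. X j))"
    by auto
  then show ?case using insert by (metis dfn0_Int insertI1 insertI2)
qed

lemma dfn0_UN: "finite I \<Longrightarrow> (\<And>i. i \<in> I \<Longrightarrow> dfn0 S n (X i)) \<Longrightarrow> dfn0 S n (\<Union>i\<in>I. X i)"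
proof (induction I rule: finite_induct)
  case empty then show ?case using dfn0_empty by simp
next
  case (insert i I)
  then show ?case by (simp only: UN_insert) (intro dfn0_Un; simp)
qed

lemma dfn0_proj1: "dfn0 S (Suc n) X \<Longrightarrow> dfn0 S n {xs. \<exists>a. xs @ [a] \<in> X}"
  unfolding dfn0_def
proof (elim exE conjE)
  fix \<phi> assume h: "wf_fm S \<phi>" "fv \<phi> \<subseteq> {..<Suc n}"
    "X = {xs. length xs = Suc n \<and> sat S (asg xs (\<lambda>_. undefined)) \<phi>}"
  have e: "sat S (asg xs v) (Ex n \<phi>) = (\<exists>a. sat S (asg (xs @ [a]) v) \<phi>)" if "length xs = n" for xs v
  proof -
    have "\<And>a. (asg xs v)(n := a) = asg (xs @ [a]) v"
      using that by (auto simp: asg_def fun_eq_iff nth_append)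
    then show ?thesis by (simp del: fun_upd_apply)
  qed
  show "\<exists>\<psi>. wf_fm S \<psi> \<and> fv \<psi> \<subseteq> {..<n} \<and>
      {xs. \<exists>a. xs @ [a] \<in> X} = {xs. length xs = n \<and> sat S (asg xs (\<lambda>_. undefined)) \<psi>}"
  proof (rule exI[of _ "Ex n \<phi>"], intro conjI)
    show "fv (Ex n \<phi>) \<subseteq> {..<n}" using h(2) by (auto simp: less_Suc_eq)
    show "{xs. \<exists>a. xs @ [a] \<in> X} = {xs. length xs = n \<and> sat S (asg xs (\<lambda>_. undefined)) (Ex n \<phi>)}"
    proof (intro set_eqI iffI)
      fix xs assume "xs \<in> {xs. \<exists>a. xs @ [a] \<in> X}"
      then obtain a where "xs @ [a] \<in> X" by blast
      then have "length xs = n" "sat S (asg (xs @ [a]) (\<lambda>_. undefined)) \<phi>" using h(3) by auto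
      then show "xs \<in> {xs. length xs = n \<and> sat S (asg xs (\<lambda>_. undefined)) (Ex n \<phi>)}"
        using e[of xs "\<lambda>_. undefined"] by blast
    next
      fix xs assume "xs \<in> {xs. length xs = n \<and> sat S (asg xs (\<lambda>_. undefined)) (Ex n \<phi>)}"
      then have "length xs = n" "\<exists>a. sat S (asg (xs @ [a]) (\<lambda>_. undefined)) \<phi>"
        using e[of xs "\<lambda>_. undefined"] by auto
      then show "xs \<in> {xs. \<exists>a. xs @ [a] \<in> X}" using h(3) by auto
    qed
  qed (use h in simp)
qed

lemma dfn0_proj: "dfn0 S (n + k) X \<Longrightarrow> dfn0 S n {xs. \<exists>ys. length ys = k \<and> xs @ ys \<in> X}"
proof (induction k arbitrary: X)
  case 0
  have "{xs. \<exists>ys. length ys = 0 \<and> xs @ ys \<in> X} = X" by auto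
  then show ?case using 0 by simp
next
  case (Suc k)
  have d: "dfn0 S (n + k) {xs. \<exists>a. xs @ [a] \<in> X}" using Suc.prems by (intro dfn0_proj1) simp
  have "{xs. \<exists>ys. length ys = Suc k \<and> xs @ ys \<in> X} =
        {xs. \<exists>ys. length ys = k \<and> xs @ ys \<in> {xs. \<exists>a. xs @ [a] \<in> X}}"
  proof (intro set_eqI iffI)
    fix xs assume "xs \<in> {xs. \<exists>ys. length ys = Suc k \<and> xs @ ys \<in> X}"
    then obtain ys where ys: "length ys = Suc k" "xs @ ys \<in> X" by auto
    then obtain zs a where "ys = zs @ [a]" by (metis append_butlast_last_id length_0_conv nat.distinct(1))
    then show "xs \<in> {xs. \<exists>ys. length ys = k \<and> xs @ ys \<in> {xs. \<exists>a. xs @ [a] \<in> X}}"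
      using ys by (intro CollectI exI[of _ zs]) auto
  next
    fix xs assume "xs \<in> {xs. \<exists>ys. length ys = k \<and> xs @ ys \<in> {xs. \<exists>a. xs @ [a] \<in> X}}"
    then obtain ys a where "length ys = k" "xs @ ys @ [a] \<in> X" by auto
    then show "xs \<in> {xs. \<exists>ys. length ys = Suc k \<and> xs @ ys \<in> X}"
      by (intro CollectI exI[of _ "ys @ [a]"]) auto
  qed
  then show ?case using Suc.IH[OF d] by simp
qed

lemma dfn0_sub:
  fixes S :: "('a,'f,'r,'z) struc_scheme"
  assumes Z: "dfn0 S k Z" and \<sigma>: "\<And>l. l < k \<Longrightarrow> \<sigma> l < N"
  shows "dfn0 S N {ws. length ws = N \<and> map (\<lambda>l. ws ! \<sigma> l) [0..<k] \<in> Z}"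
proof -
  obtain \<phi> where h: "wf_fm S \<phi>" "fv \<phi> \<subseteq> {..<k}"
    "Z = {xs. length xs = k \<and> sat S (asg xs (\<lambda>_. undefined)) \<phi>}"
    using Z unfolding dfn0_def by blast
  define sh where "sh = (\<lambda>i::nat. i + N)"
  have injsh: "inj sh" unfolding sh_def by (auto intro: injI)
  define eqs :: "('f,'r) fm" where "eqs = conjs (map (\<lambda>l. Eq (Var (N+l)) (Var (\<sigma> l))) [0..<k])"
  define \<theta> where "\<theta> = exs N k (Conj eqs (rfm sh \<phi>))"
  have wf: "wf_fm S \<theta>" unfolding \<theta>_def eqs_def
    by (simp add: wf_exs wf_conjs wf_rfm h)
  have fv: "fv \<theta> \<subseteq> {..<N}"
  proof
    fix i assume "i \<in> fv \<theta>"
    then have i: "i \<in> fv eqs \<union> sh ` fv \<phi>" "i \<notin> {N..<N+k}"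
      unfolding \<theta>_def by (auto simp: fv_exs fv_rfm[OF injsh])
    show "i \<in> {..<N}"
    proof (cases "i \<in> fv eqs")
      case True
      then obtain l where "l < k" "i = N + l \<or> i = \<sigma> l" unfolding eqs_def by (auto simp: fv_conjs)
      then show ?thesis using i \<sigma> by auto
    next
      case False
      then obtain j where "j \<in> fv \<phi>" "i = j + N" using i unfolding sh_def by auto
      then show ?thesis using i h(2) by auto
    qed
  qed
  have sem: "sat S (asg ws v) \<theta> \<longleftrightarrow> map (\<lambda>l. ws ! \<sigma> l) [0..<k] \<in> Z" if ws: "length ws = N" for ws v
  proof -
    have "sat S (asg ws v) \<theta> \<longleftrightarrow> (\<exists>us. length us = k \<and> sat S (upd N us (asg ws v)) (Conj eqs (rfm sh \<phi>)))"
      unfolding \<theta>_def by (rule sat_exs)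
    also have "\<dots> \<longleftrightarrow> (\<exists>us. length us = k \<and> us = map (\<lambda>l. ws ! \<sigma> l) [0..<k] \<and> us \<in> Z)"
    proof (intro ex_cong1 conj_cong refl)
      fix us :: "'a list" assume us: "length us = k"
      let ?w = "upd N us (asg ws v)"
      have w1: "?w (N + l) = us ! l" if "l < k" for l using that us by (auto simp: upd_def)
      have w2: "?w (\<sigma> l) = ws ! \<sigma> l" if "l < k" for l using that \<sigma>[OF that] ws by (auto simp: upd_def asg_def)
      have "sat S ?w eqs \<longleftrightarrow> (\<forall>l<k. us ! l = ws ! \<sigma> l)"
        unfolding eqs_def by (auto simp: sat_conjs w1 w2)
      also have "\<dots> \<longleftrightarrow> us = map (\<lambda>l. ws ! \<sigma> l) [0..<k]"
        using us by (auto simp: list_eq_iff_nth_eq)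
      finally have E: "sat S ?w eqs \<longleftrightarrow> us = map (\<lambda>l. ws ! \<sigma> l) [0..<k]" .
      have "sat S ?w (rfm sh \<phi>) = sat S (?w \<circ> sh) \<phi>" by (rule sat_rfm[OF injsh])
      also have "\<dots> = sat S (asg us (\<lambda>_. undefined)) \<phi>"
        by (rule sat_cong) (use h(2) us in \<open>auto simp: upd_def asg_def sh_def\<close>)
      finally have F: "sat S ?w (rfm sh \<phi>) \<longleftrightarrow> us \<in> Z" using h(3) us by simp
      show "sat S ?w (Conj eqs (rfm sh \<phi>)) \<longleftrightarrow> (us = map (\<lambda>l. ws ! \<sigma> l) [0..<k] \<and> us \<in> Z)"
        using E F by simp
    qed
    also have "\<dots> \<longleftrightarrow> map (\<lambda>l. ws ! \<sigma> l) [0..<k] \<in> Z" by auto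
    finally show ?thesis .
  qed
  show ?thesis unfolding dfn0_def
    by (rule exI[of _ \<theta>]) (use wf fv sem in auto)
qed

lemma dfn0_fix:
  assumes "dfn0 S (n + k) X" "length ds = k"
  shows "definable S n {xs. xs @ ds \<in> X}"
proof -
  obtain \<phi> where h: "wf_fm S \<phi>" "fv \<phi> \<subseteq> {..<n+k}"
    "X = {xs. length xs = n + k \<and> sat S (asg xs (\<lambda>_. undefined)) \<phi>}"
    using assms(1) unfolding dfn0_def by blast
  define v where "v = (\<lambda>i. if n \<le> i \<and> i < n + k then ds ! (i - n) else undefined)"
  have "sat S (asg xs v) \<phi> = sat S (asg (xs @ ds) (\<lambda>_. undefined)) \<phi>" if "length xs = n" for xs
    by (rule sat_cong) (use h(2) that assms(2) in \<open>auto simp: asg_def v_def nth_append\<close>)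
  then have "{xs. xs @ ds \<in> X} = {xs. length xs = n \<and> sat S (asg xs v) \<phi>}"
    using h(3) assms(2) by auto
  then show ?thesis unfolding definable_def using h(1) by blast
qed

lemma dfn0_eq2: "dfn0 S 2 {xs. length xs = 2 \<and> xs ! 0 = xs ! 1}"
proof -
  have "{xs. length xs = 2 \<and> xs ! 0 = xs ! 1} =
        {xs. length xs = 2 \<and> sat S (asg xs (\<lambda>_. undefined)) (Eq (Var 0) (Var 1))}"
    by (auto simp: asg_def)
  then show ?thesis by (simp only:) (rule dfn0_formula; simp)
qed


lemma rot_map: "length cs = k \<Longrightarrow>
  map (\<lambda>l. (c # cs) ! (if l < k then Suc l else 0)) [0..<Suc k] = cs @ [c]"
  by (rule nth_equalityI) (auto simp: nth_append)

lemma sat_step: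
  fixes M :: "('a,'f,'r) struc"
  assumes sat: "aleph1_saturated M"
  and D: "\<And>D. D \<in> \<D> \<Longrightarrow> dfn0 M (Suc k) D" and cs: "length cs = k"
  and fin: "\<And>F. F \<subseteq> \<D> \<Longrightarrow> finite F \<Longrightarrow> \<exists>c. \<forall>D\<in>F. cs @ [c] \<in> D"
  shows "\<exists>c. \<forall>D\<in>\<D>. cs @ [c] \<in> D"
proof -
  define \<sigma> where "\<sigma> = (\<lambda>l. if l < k then Suc l else (0::nat))"
  define D' where "D' = (\<lambda>D::'a list set. {zs::'a list. length zs = Suc k \<and> map (\<lambda>l. zs ! \<sigma> l) [0..<Suc k] \<in> D})"
  have dD': "dfn0 M (Suc k) (D' D)" if "D \<in> \<D>" for D
    unfolding D'_def by (rule dfn0_sub[OF D[OF that]]) (auto simp: \<sigma>_def)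
  define P where "P = (\<lambda>D \<phi>. wf_fm M \<phi> \<and> fv \<phi> \<subseteq> {..<Suc k} \<and>
      D' D = {xs. length xs = Suc k \<and> sat M (asg xs (\<lambda>_. undefined)) \<phi>})"
  define \<phi>D where "\<phi>D = (\<lambda>D. SOME \<phi>. P D \<phi>)"
  have P: "P D (\<phi>D D)" if "D \<in> \<D>" for D
    unfolding \<phi>D_def by (rule someI_ex) (use dD'[OF that] in \<open>auto simp: dfn0_def P_def\<close>)
  define w where "w = asg (undefined # cs) (\<lambda>_::nat. undefined :: 'a)"
  define A where "A = insert undefined (set cs)"
  define \<Phi> where "\<Phi> = (\<lambda>D. (\<phi>D D, w)) ` \<D>"
  have key: "sat M (w(0 := c)) (\<phi>D D) \<longleftrightarrow> cs @ [c] \<in> D" if "D \<in> \<D>" for D c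
  proof -
    have "w(0 := c) = asg (c # cs) (\<lambda>_. undefined)"
      unfolding w_def by (auto simp: asg_def fun_eq_iff nth_Cons')
    then have "sat M (w(0 := c)) (\<phi>D D) \<longleftrightarrow> c # cs \<in> D' D"
      using P[OF that] cs unfolding P_def by auto
    also have "\<dots> \<longleftrightarrow> cs @ [c] \<in> D"
      using rot_map[OF cs, of c] cs unfolding D'_def \<sigma>_def by auto
    finally show ?thesis .
  qed
  have cA: "countable A" unfolding A_def by (simp add: countable_finite)
  have h1: "\<forall>(\<phi>, w') \<in> \<Phi>. wf_fm M \<phi> \<and> (\<forall>i. i \<noteq> 0 \<longrightarrow> w' i \<in> A)"
  proof (clarsimp simp: \<Phi>_def)
    fix D assume "D \<in> \<D>"
    show "wf_fm M (\<phi>D D) \<and> (\<forall>i. 0 < i \<longrightarrow> w i \<in> A)"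
    proof
      show "wf_fm M (\<phi>D D)" using P[OF \<open>D \<in> \<D>\<close>] unfolding P_def by simp
      show "\<forall>i. 0 < i \<longrightarrow> w i \<in> A"
      proof (intro allI impI)
        fix i :: nat assume "0 < i"
        then obtain j where j: "i = Suc j" by (cases i) auto
        show "w i \<in> A"
        proof (cases "j < k")
          case True
          then have "w i = cs ! j" unfolding w_def asg_def j using cs by simp
          then show ?thesis unfolding A_def using True cs by simp
        next
          case False
          then have "w i = undefined" unfolding w_def asg_def j using cs by simp
          then show ?thesis unfolding A_def by simp
        qed
      qed
    qed
  qed
  have h2: "\<forall>F. F \<subseteq> \<Phi> \<longrightarrow> finite F \<longrightarrow> (\<exists>c. \<forall>(\<phi>, w') \<in> F. sat M (w'(0 := c)) \<phi>)"
  proof (intro allI impI)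
    fix F assume F: "F \<subseteq> \<Phi>" "finite F"
    then obtain F' where F': "F' \<subseteq> \<D>" "finite F'" "F = (\<lambda>D. (\<phi>D D, w)) ` F'"
      unfolding \<Phi>_def by (metis finite_subset_image)
    obtain c where c: "\<forall>D\<in>F'. cs @ [c] \<in> D" using fin[OF F'(1,2)] by blast
    show "\<exists>c. \<forall>(\<phi>, w') \<in> F. sat M (w'(0 := c)) \<phi>"
    proof (rule exI[of _ c], rule ballI)
      fix x assume "x \<in> F"
      then obtain D where D: "D \<in> F'" "x = (\<phi>D D, w)" using F'(3) by blast
      have DD: "D \<in> \<D>" using F'(1) D(1) by blast
      have "cs @ [c] \<in> D" using c D(1) by blast
      then have "sat M (w(0 := c)) (\<phi>D D)" using key[OF DD] by (simp only:)
      then show "case x of (\<phi>, w') \<Rightarrow> sat M (w'(0 := c)) \<phi>" unfolding D(2) by simp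
    qed
  qed
  obtain c where c: "\<forall>(\<phi>, w') \<in> \<Phi>. sat M (w'(0 := c)) \<phi>"
    using sat[unfolded aleph1_saturated_def, rule_format, OF cA h1[rule_format] h2[rule_format]] by blast
  show ?thesis
  proof (rule exI[of _ c], rule ballI)
    fix D assume D: "D \<in> \<D>"
    then have "(\<phi>D D, w) \<in> \<Phi>" unfolding \<Phi>_def by blast
    from bspec[OF c this] have "sat M (w(0 := c)) (\<phi>D D)" by simp
    then show "cs @ [c] \<in> D" using key[OF D] by (simp only:)
  qed
qed


primrec bld :: "('a list \<Rightarrow> bool) \<Rightarrow> nat \<Rightarrow> 'a list" where
  "bld G 0 = []"
| "bld G (Suc n) = bld G n @ [SOME x. G (bld G n @ [x])]"

lemma bld_len: "length (bld G n) = n"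
  by (induction n) auto

lemma bld_good: "G [] \<Longrightarrow> (\<And>cs. G cs \<Longrightarrow> \<exists>x. G (cs @ [x])) \<Longrightarrow> G (bld G n)"
proof (induction n)
  case (Suc n)
  then have "G (bld G n)" by blast
  then have "\<exists>x. G (bld G n @ [x])" using Suc.prems(2) by blast
  from someI_ex[OF this] show ?case by simp
qed simp

lemma bld_nth: "i < n \<Longrightarrow> bld G n ! i = bld G (Suc i) ! i"
proof (induction n)
  case (Suc n)
  show ?case
  proof (cases "i < n")
    case True then show ?thesis using Suc by (simp add: nth_append bld_len)
  next
    case False then have "i = n" using Suc.prems by simp
    then show ?thesis by simp
  qed
qed simp

lemma divmod_block: "l < (L::nat) \<Longrightarrow> (i * L + l) div L = i \<and> (i * L + l) mod L = l"
  by simp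

lemma block_bound: "i < K \<Longrightarrow> l < (L::nat) \<Longrightarrow> i * L + l < K * L"
proof -
  assume a: "i < K" "l < L"
  have "i * L + l < Suc i * L" using a(2) by simp
  also have "\<dots> \<le> K * L" using a(1) by (intro mult_le_mono1) simp
  finally show ?thesis .
qed

lemma compact_config:
  fixes M :: "('a,'f,'r) struc" and R :: "nat \<Rightarrow> nat \<Rightarrow> bool"
  assumes sat: "aleph1_saturated M" and wf: "wf_fm M \<phi>" and fv: "fv \<phi> \<subseteq> {..<p+q}"
  and fin: "\<And>K. \<exists>a b. (\<forall>i. length (a i) = p \<and> length (b i) = q) \<and>
      (\<forall>i<K. \<forall>j<K. sat M (asg (a i @ b j) (\<lambda>_. undefined)) \<phi> \<longleftrightarrow> R i j)"
  shows "\<exists>a b. (\<forall>i. length (a i) = p \<and> length (b i) = q) \<and>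
      (\<forall>i j. sat M (asg (a i @ b j) (\<lambda>_. undefined)) \<phi> \<longleftrightarrow> R i j)"
proof -
  define L where "L = p + q"
  define \<sigma> where "\<sigma> = (\<lambda>i j l. if l < p then i * L + l else j * L + l)"
  define Pat where "Pat = (\<lambda>K (c :: nat \<Rightarrow> 'a). \<forall>i<K. \<forall>j<K.
      sat M (asg (map (\<lambda>l. c (\<sigma> i j l)) [0..<L]) (\<lambda>_. undefined)) \<phi> \<longleftrightarrow> R i j)"
  define good where "good = (\<lambda>cs. \<forall>K. \<exists>c. (\<forall>i<length cs. c i = cs ! i) \<and> Pat K c)"
  have sig: "\<sigma> i j l < K * L" if "i < K" "j < K" "l < L" for i j l K
    unfolding \<sigma>_def using block_bound that by auto
  have Pat_mono: "Pat K c" if "Pat K' c" "K \<le> K'" for K K' c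
    using that unfolding Pat_def by auto
  have Pat_cong: "Pat K c \<longleftrightarrow> Pat K c'" if "\<forall>n<K*L. c n = c' n" for K c c'
  proof -
    have eq: "map (\<lambda>l. c (\<sigma> i j l)) [0..<L] = map (\<lambda>l. c' (\<sigma> i j l)) [0..<L]" if "i < K" "j < K" for i j
      by (rule map_cong[OF refl]) (use sig[OF that] \<open>\<forall>n<K*L. c n = c' n\<close> in auto)
    show ?thesis unfolding Pat_def by (metis eq)
  qed
  have ab_eq: "map (\<lambda>l. (\<lambda>n. (a (n div L) @ b (n div L)) ! (n mod L)) (\<sigma> i j l)) [0..<L] = a i @ b j"
    if "\<forall>i. length (a i) = p \<and> length (b i) = q" for a b i j
  proof (rule nth_equalityI)
    show "length (map (\<lambda>l. (\<lambda>n. (a (n div L) @ b (n div L)) ! (n mod L)) (\<sigma> i j l)) [0..<L]) = length (a i @ b j)"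
      using that by (simp add: L_def)
    fix l assume "l < length (map (\<lambda>l. (\<lambda>n. (a (n div L) @ b (n div L)) ! (n mod L)) (\<sigma> i j l)) [0..<L])"
    then have l: "l < L" by simp
    show "map (\<lambda>l. (\<lambda>n. (a (n div L) @ b (n div L)) ! (n mod L)) (\<sigma> i j l)) [0..<L] ! l = (a i @ b j) ! l"
    proof (cases "l < p")
      case True
      then show ?thesis using l that divmod_block[OF l, of i] by (simp add: \<sigma>_def nth_append)
    next
      case False
      then show ?thesis using l that divmod_block[OF l, of j] by (simp add: \<sigma>_def nth_append)
    qed
  qed
  have good0: "good []"
    unfolding good_def
  proof
    fix K
    obtain a b where ab: "\<forall>i. length (a i) = p \<and> length (b i) = q"
      "\<forall>i<K. \<forall>j<K. sat M (asg (a i @ b j) (\<lambda>_. undefined)) \<phi> \<longleftrightarrow> R i j"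
      using fin by blast
    show "\<exists>c. (\<forall>i<length []. c i = [] ! i) \<and> Pat K c"
      by (rule exI[of _ "\<lambda>n. (a (n div L) @ b (n div L)) ! (n mod L)"])
         (use ab ab_eq[OF ab(1)] in \<open>simp add: Pat_def\<close>)
  qed
  define Z where "Z = {xs. length xs = L \<and> sat M (asg xs (\<lambda>_. undefined)) \<phi>}"
  have dZ: "dfn0 M L Z" unfolding Z_def by (rule dfn0_formula[OF wf]) (use fv in \<open>simp add: L_def\<close>)
  have step: "\<exists>x. good (cs @ [x])" if gcs: "good cs" for cs
  proof -
    define k where "k = length cs"
    define D where "D = (\<lambda>K. {zs. length zs = Suc k \<and> (\<exists>c. (\<forall>i<Suc k. c i = zs ! i) \<and> Pat K c)})"
    have dD: "dfn0 M (Suc k) (D K)" for K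
    proof -
      define N where "N = max (Suc k) (K * L)"
      define A where "A = (\<lambda>(i,j). {ws. length ws = N \<and> (map (\<lambda>l. ws ! \<sigma> i j l) [0..<L] \<in> Z \<longleftrightarrow> R i j)})"
      define PK where "PK = {ws. length ws = N} \<inter> (\<Inter>ij\<in>{..<K} \<times> {..<K}. A ij)"
      have dA: "dfn0 M N (A ij)" if ijK: "ij \<in> {..<K} \<times> {..<K}" for ij
      proof -
        obtain i j where ij: "ij = (i, j)" "i < K" "j < K" using ijK by (cases ij) auto
        have dS: "dfn0 M N {ws. length ws = N \<and> map (\<lambda>l. ws ! \<sigma> i j l) [0..<L] \<in> Z}"
          by (rule dfn0_sub[OF dZ]) (use sig[OF ij(2,3)] in \<open>fastforce simp: N_def less_max_iff_disj\<close>)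
        show ?thesis
        proof (cases "R i j")
          case True
          then have "A ij = {ws. length ws = N \<and> map (\<lambda>l. ws ! \<sigma> i j l) [0..<L] \<in> Z}"
            unfolding A_def ij by auto
          then show ?thesis using dS by simp
        next
          case False
          then have "A ij = {ws. length ws = N \<and> ws \<notin> {ws. length ws = N \<and> map (\<lambda>l. ws ! \<sigma> i j l) [0..<L] \<in> Z}}"
            unfolding A_def ij by auto
          then show ?thesis using dfn0_compl[OF dS] by simp
        qed
      qed
      have dPK: "dfn0 M N PK" unfolding PK_def by (rule dfn0_INT) (use dA in auto)
      have Neq: "N = Suc k + (N - Suc k)" unfolding N_def by simp
      have dP: "dfn0 M (Suc k) {xs. \<exists>ys. length ys = N - Suc k \<and> xs @ ys \<in> PK}"
        by (rule dfn0_proj) (use dPK Neq in simp)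
      have "D K = {xs. \<exists>ys. length ys = N - Suc k \<and> xs @ ys \<in> PK}"
      proof (intro set_eqI iffI)
        fix zs assume "zs \<in> D K"
        then obtain c where c: "length zs = Suc k" "\<forall>i<Suc k. c i = zs ! i" "Pat K c"
          unfolding D_def by blast
        define ys where "ys = map c [Suc k..<N]"
        have zs: "zs @ ys = map c [0..<N]"
          by (rule nth_equalityI) (use c in \<open>auto simp: ys_def nth_append N_def\<close>)
        have "zs @ ys \<in> PK"
          unfolding PK_def A_def
        proof (intro IntI CollectI INT_I; clarify?)
          show "length (zs @ ys) = N" using zs by simp
          fix i j assume ij: "i < K" "j < K"
          have meq: "map (\<lambda>l. (zs @ ys) ! \<sigma> i j l) [0..<L] = map (\<lambda>l. c (\<sigma> i j l)) [0..<L]"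
            using sig[OF ij] zs by (auto simp: N_def less_max_iff_disj)
          have "sat M (asg (map (\<lambda>l. c (\<sigma> i j l)) [0..<L]) (\<lambda>_. undefined)) \<phi> \<longleftrightarrow> R i j"
            using c(3) ij unfolding Pat_def by blast
          then have "map (\<lambda>l. (zs @ ys) ! \<sigma> i j l) [0..<L] \<in> Z \<longleftrightarrow> R i j"
            unfolding meq Z_def by simp
          then show "length (zs @ ys) = N \<and> (map (\<lambda>l. (zs @ ys) ! \<sigma> i j l) [0..<L] \<in> Z \<longleftrightarrow> R i j)"
            using zs by simp
        qed
        moreover have "length ys = N - Suc k" by (simp add: ys_def)
        ultimately show "zs \<in> {xs. \<exists>ys. length ys = N - Suc k \<and> xs @ ys \<in> PK}"
          by blast
      next
        fix zs assume "zs \<in> {xs. \<exists>ys. length ys = N - Suc k \<and> xs @ ys \<in> PK}"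
        then obtain ys where ys: "length ys = N - Suc k" "zs @ ys \<in> PK" by blast
        have lz: "length zs = Suc k" using ys unfolding PK_def N_def by auto
        define c where "c = (\<lambda>i. (zs @ ys) ! i)"
        have "Pat K c" unfolding Pat_def
        proof (intro allI impI)
          fix i j assume ij: "i < K" "j < K"
          then have "zs @ ys \<in> A (i, j)" using ys(2) unfolding PK_def by blast
          then show "sat M (asg (map (\<lambda>l. c (\<sigma> i j l)) [0..<L]) (\<lambda>_. undefined)) \<phi> \<longleftrightarrow> R i j"
            unfolding A_def Z_def c_def by simp
        qed
        moreover have "\<forall>i<Suc k. c i = zs ! i" unfolding c_def using lz by (simp add: nth_append)
        ultimately show "zs \<in> D K" unfolding D_def using lz by blast
      qed
      then show ?thesis using dP by simp
    qed
    have fin': "\<exists>x. \<forall>D'\<in>F. cs @ [x] \<in> D'" if F: "F \<subseteq> range D" "finite F" for F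
    proof -
      obtain F' where F': "finite F'" "F = D ` F'" using F by (metis finite_subset_image subset_UNIV)
      define Km where "Km = Max (insert 0 F')"
      obtain c where c: "\<forall>i<length cs. c i = cs ! i" "Pat Km c" using gcs unfolding good_def by blast
      have "cs @ [c k] \<in> D K" if "K \<in> F'" for K
      proof -
        have "K \<le> Km" unfolding Km_def using that F'(1) by simp
        then have P: "Pat K c" using Pat_mono c(2) by blast
        have E: "\<forall>i<Suc k. c i = (cs @ [c k]) ! i"
          using c(1) by (auto simp: nth_append k_def less_Suc_eq)
        have lenok: "length (cs @ [c k]) = Suc k" by (simp add: k_def)
        show ?thesis unfolding D_def using lenok P E by blast
      qed
      then show ?thesis using F' by blast
    qed
    have "\<exists>x. \<forall>D'\<in>range D. cs @ [x] \<in> D'"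
    proof (rule sat_step[OF sat])
      show "\<And>D'. D' \<in> range D \<Longrightarrow> dfn0 M (Suc k) D'" using dD by blast
      show "length cs = k" by (simp add: k_def)
      show "\<And>F. F \<subseteq> range D \<Longrightarrow> finite F \<Longrightarrow> \<exists>x. \<forall>D'\<in>F. cs @ [x] \<in> D'" by (rule fin')
    qed
    then obtain x where x: "\<forall>D'\<in>range D. cs @ [x] \<in> D'" by blast
    have "good (cs @ [x])" unfolding good_def
    proof
      fix K
      have "cs @ [x] \<in> D K" using x by blast
      then obtain c where "\<forall>i<Suc k. c i = (cs @ [x]) ! i" "Pat K c"
        unfolding D_def by blast
      moreover have "length (cs @ [x]) = Suc k" by (simp add: k_def)
      ultimately show "\<exists>c. (\<forall>i<length (cs @ [x]). c i = (cs @ [x]) ! i) \<and> Pat K c"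
        by metis
    qed
    then show ?thesis by blast
  qed
  define c where "c = (\<lambda>i. bld good (Suc i) ! i)"
  have PatK: "Pat K c" for K
  proof -
    have g: "good (bld good (K * L))" by (rule bld_good) (use good0 step in blast)+
    then obtain c' where c': "\<forall>i<length (bld good (K * L)). c' i = bld good (K*L) ! i" "Pat K c'"
      unfolding good_def by blast
    have "c n = c' n" if "n < K * L" for n
      using c'(1) bld_nth[OF that, of good] that unfolding c_def by (simp add: bld_len)
    then have "\<forall>n<K*L. c n = c' n" by blast
    then show ?thesis using Pat_cong c'(2) by blast
  qed
  define a where "a = (\<lambda>i. map (\<lambda>l. c (i * L + l)) [0..<p])"
  define b where "b = (\<lambda>j. map (\<lambda>l. c (j * L + (p + l))) [0..<q])"
  have abm: "a i @ b j = map (\<lambda>l. c (\<sigma> i j l)) [0..<L]" for i j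
    by (rule nth_equalityI) (auto simp: a_def b_def \<sigma>_def L_def nth_append)
  have l: "\<forall>i. length (a i) = p \<and> length (b i) = q" by (simp add: a_def b_def)
  have s: "\<forall>i j. sat M (asg (a i @ b j) (\<lambda>_. undefined)) \<phi> \<longleftrightarrow> R i j"
  proof (intro allI)
    fix i j
    have "Pat (Suc (max i j)) c" by (rule PatK)
    then show "sat M (asg (a i @ b j) (\<lambda>_. undefined)) \<phi> \<longleftrightarrow> R i j"
      unfolding Pat_def abm by (metis le_imp_less_Suc max.cobounded1 max.cobounded2)
  qed
  show ?thesis using l s by blast
qed


definition piso :: "('b \<Rightarrow> 'b \<Rightarrow> bool) \<Rightarrow> 'b set \<Rightarrow> ('b \<Rightarrow> 'b) \<Rightarrow> bool" where
  "piso R A f \<longleftrightarrow> finite A \<and> inj_on f A \<and> (\<forall>x\<in>A. \<forall>y\<in>A. R x y \<longleftrightarrow> R (f x) (f y))"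

lemma piso_inv: "piso R A f \<Longrightarrow> piso R (f ` A) (inv_into A f)"
  unfolding piso_def
proof (elim conjE, intro conjI)
  assume a: "finite A" "inj_on f A" "\<forall>x\<in>A. \<forall>y\<in>A. R x y = R (f x) (f y)"
  show "finite (f ` A)" using a by simp
  show "inj_on (inv_into A f) (f ` A)" by (rule inj_on_inv_into) simp
  show "\<forall>x\<in>f ` A. \<forall>y\<in>f ` A. R x y = R (inv_into A f x) (inv_into A f y)"
  proof (intro ballI)
    fix x y assume xy: "x \<in> f ` A" "y \<in> f ` A"
    then obtain a b where ab: "a \<in> A" "b \<in> A" "x = f a" "y = f b" by blast
    have "inv_into A f x = a" "inv_into A f y = b" using ab a(2) by (simp_all add: inv_into_f_f)
    then show "R x y = R (inv_into A f x) (inv_into A f y)" using a(3) ab by simp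
  qed
qed

locale forthR =
  fixes R :: "'b::countable \<Rightarrow> 'b \<Rightarrow> bool"
  assumes forth: "\<And>A f x. piso R A f \<Longrightarrow> x \<notin> A \<Longrightarrow> \<exists>y. piso R (insert x A) (f(x := y))"
begin

lemma forth_ext: "piso R A f \<Longrightarrow> \<exists>f'. piso R (insert x A) f' \<and> (\<forall>a\<in>A. f' a = f a)"
proof (cases "x \<in> A")
  case True
  assume "piso R A f" then show ?thesis using True by (intro exI[of _ f]) (simp add: insert_absorb)
next
  case False
  assume p: "piso R A f"
  obtain y where "piso R (insert x A) (f(x := y))" using forth[OF p False] by blast
  then show ?thesis using False by (intro exI[of _ "f(x := y)"]) auto
qed

lemma back_ext: assumes p: "piso R A f"
  shows "\<exists>A' f'. piso R A' f' \<and> A \<subseteq> A' \<and> (\<forall>a\<in>A. f' a = f a) \<and> y \<in> f' ` A'"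
proof -
  define h where "h = inv_into A f"
  have ph: "piso R (f ` A) h" unfolding h_def by (rule piso_inv[OF p])
  obtain k where k: "piso R (insert y (f ` A)) k" "\<forall>b\<in>f ` A. k b = h b"
    using forth_ext[OF ph] by blast
  define A' where "A' = k ` insert y (f ` A)"
  define f' where "f' = inv_into (insert y (f ` A)) k"
  have p': "piso R A' f'" unfolding A'_def f'_def by (rule piso_inv[OF k(1)])
  have injk: "inj_on k (insert y (f ` A))" using k(1) unfolding piso_def by simp
  have injf: "inj_on f A" using p unfolding piso_def by simp
  have kfa: "k (f a) = a" if "a \<in> A" for a
    using k(2) that injf unfolding h_def by (simp add: inv_into_f_f)
  have sub: "A \<subseteq> A'"
  proof
    fix a assume "a \<in> A"
    then have "k (f a) \<in> A'" unfolding A'_def by blast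
    then show "a \<in> A'" using kfa[OF \<open>a \<in> A\<close>] by simp
  qed
  have agree: "\<forall>a\<in>A. f' a = f a"
  proof
    fix a assume a: "a \<in> A"
    have "f' (k (f a)) = f a" unfolding f'_def using injk a by (simp add: inv_into_f_f)
    then show "f' a = f a" using kfa[OF a] by simp
  qed
  have "f' (k y) = y" unfolding f'_def using injk by (simp add: inv_into_f_f)
  moreover have "k y \<in> A'" unfolding A'_def by blast
  ultimately have "y \<in> f' ` A'" by (metis imageI)
  then show ?thesis using p' sub agree by blast
qed

lemma step_ext: assumes p: "piso R A f"
  shows "\<exists>q. piso R (fst q) (snd q) \<and> A \<subseteq> fst q \<and> (\<forall>a\<in>A. snd q a = f a) \<and> x \<in> fst q \<and> y \<in> snd q ` fst q"
proof -
  obtain f1 where f1: "piso R (insert x A) f1" "\<forall>a\<in>A. f1 a = f a" using forth_ext[OF p] by blast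
  obtain A' f' where q: "piso R A' f'" "insert x A \<subseteq> A'" "\<forall>a\<in>insert x A. f' a = f1 a" "y \<in> f' ` A'"
    using back_ext[OF f1(1), of y] by (elim exE conjE) (rule that; assumption)
  show ?thesis
  proof (rule exI[of _ "(A', f')"], simp only: fst_conv snd_conv, intro conjI)
    show "piso R A' f'" by (rule q(1))
    show "A \<subseteq> A'" using q(2) by blast
    show "\<forall>a\<in>A. f' a = f a" using q(3) f1(2) by simp
    show "x \<in> A'" using q(2) by blast
    show "y \<in> f' ` A'" by (rule q(4))
  qed
qed

end

definition nxt :: "('b::countable \<Rightarrow> 'b \<Rightarrow> bool) \<Rightarrow> nat \<Rightarrow> 'b set \<times> ('b \<Rightarrow> 'b) \<Rightarrow> 'b set \<times> ('b \<Rightarrow> 'b)" where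
  "nxt R n p = (SOME q. piso R (fst q) (snd q) \<and> fst p \<subseteq> fst q \<and> (\<forall>a\<in>fst p. snd q a = snd p a)
      \<and> from_nat n \<in> fst q \<and> from_nat n \<in> snd q ` fst q)"

primrec stp :: "('b::countable \<Rightarrow> 'b \<Rightarrow> bool) \<Rightarrow> 'b set \<Rightarrow> ('b \<Rightarrow> 'b) \<Rightarrow> nat \<Rightarrow> 'b set \<times> ('b \<Rightarrow> 'b)" where
  "stp R A f 0 = (A, f)"
| "stp R A f (Suc n) = nxt R n (stp R A f n)"

lemma (in forthR) homog:
  assumes p: "piso R A f"
  shows "\<exists>g. bij g \<and> (\<forall>x y. R x y \<longleftrightarrow> R (g x) (g y)) \<and> (\<forall>x\<in>A. g x = f x)"
proof -
  let ?s = "stp R A f"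
  have props: "piso R (fst (?s n)) (snd (?s n)) \<and>
      (n > 0 \<longrightarrow> fst (?s (n - 1)) \<subseteq> fst (?s n) \<and> (\<forall>a\<in>fst (?s (n - 1)). snd (?s n) a = snd (?s (n - 1)) a)
        \<and> from_nat (n - 1) \<in> fst (?s n) \<and> from_nat (n - 1) \<in> snd (?s n) ` fst (?s n))" for n
  proof (induction n)
    case 0 then show ?case using p by simp
  next
    case (Suc n)
    then have pn: "piso R (fst (?s n)) (snd (?s n))" by blast
    from someI_ex[OF step_ext[OF pn, of "from_nat n" "from_nat n"]]
    show ?case by (simp add: nxt_def)
  qed
  have pis: "piso R (fst (?s n)) (snd (?s n))" for n using props by blast
  have mono: "fst (?s n) \<subseteq> fst (?s m) \<and> (\<forall>a\<in>fst (?s n). snd (?s m) a = snd (?s n) a)" if "n \<le> m" for n m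
    using that
  proof (induction m rule: dec_induct)
    case base then show ?case by simp
  next
    case (step m)
    have "fst (?s m) \<subseteq> fst (?s (Suc m)) \<and> (\<forall>a\<in>fst (?s m). snd (?s (Suc m)) a = snd (?s m) a)"
      using props[of "Suc m"] by simp
    then show ?case using step.IH by auto
  qed
  have xin: "x \<in> fst (?s (Suc (to_nat x)))" for x
    using props[of "Suc (to_nat x)"] by simp
  have yin: "y \<in> snd (?s (Suc (to_nat y))) ` fst (?s (Suc (to_nat y)))" for y
    using props[of "Suc (to_nat y)"] by simp
  define g where "g = (\<lambda>x. snd (?s (Suc (to_nat x))) x)"
  have gm: "g x = snd (?s m) x" if "x \<in> fst (?s m)" for x m
  proof -
    define n where "n = Suc (to_nat x)"
    have "g x = snd (?s (max n m)) x" unfolding g_def n_def[symmetric]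
      using mono[of n "max n m"] xin[of x] unfolding n_def by auto
    also have "\<dots> = snd (?s m) x" using mono[of m "max n m"] that by auto
    finally show ?thesis .
  qed
  have both: "\<exists>m. x \<in> fst (?s m) \<and> y \<in> fst (?s m)" for x y
  proof -
    define m where "m = max (Suc (to_nat x)) (Suc (to_nat y))"
    have "x \<in> fst (?s m)" using mono[of "Suc (to_nat x)" m] xin[of x] unfolding m_def by auto
    moreover have "y \<in> fst (?s m)" using mono[of "Suc (to_nat y)" m] xin[of y] unfolding m_def by auto
    ultimately show ?thesis by blast
  qed
  have Rg: "R x y \<longleftrightarrow> R (g x) (g y)" for x y
  proof -
    obtain m where m: "x \<in> fst (?s m)" "y \<in> fst (?s m)" using both by blast
    then show ?thesis using pis[of m] gm[OF m(1)] gm[OF m(2)] unfolding piso_def by simp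
  qed
  have "inj g"
  proof (rule injI)
    fix x y assume "g x = g y"
    obtain m where m: "x \<in> fst (?s m)" "y \<in> fst (?s m)" using both by blast
    then show "x = y" using pis[of m] gm[OF m(1)] gm[OF m(2)] \<open>g x = g y\<close>
      unfolding piso_def by (metis inj_on_def)
  qed
  moreover have "surj g"
  proof -
    have "y \<in> range g" for y
    proof -
      obtain a where a: "a \<in> fst (?s (Suc (to_nat y)))" "y = snd (?s (Suc (to_nat y))) a"
        using yin[of y] by blast
      then show ?thesis using gm[OF a(1)] a(2) by (metis rangeI)
    qed
    then show ?thesis by blast
  qed
  moreover have "\<forall>x\<in>A. g x = f x" using gm[of _ 0] by simp
  ultimately show ?thesis using Rg by (intro exI[of _ g]) (simp add: bij_def)
qed


lemma wf_trm_nofun: "fsyms S = {} \<Longrightarrow> wf_trm S t \<Longrightarrow> \<exists>n. t = Var n"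
  by (cases t) auto

lemma sat_aut:
  fixes Ost :: "('b, 'g, unit) struc"
  assumes Ost: "fsyms Ost = {}" "rarity Ost () = 2" "\<And>xs. rinterp Ost () xs = Rb (xs!0) (xs!1)"
  and g: "bij g" "\<And>x y. Rb x y \<longleftrightarrow> Rb (g x) (g y)"
  shows "wf_fm Ost \<theta> \<Longrightarrow> sat Ost (g \<circ> w) \<theta> = sat Ost w \<theta>"
proof (induction \<theta> arbitrary: w)
  case (Eq t u)
  obtain i j where "t = Var i" "u = Var j" using Eq wf_trm_nofun[OF Ost(1)] by fastforce
  then show ?case using g(1) by (simp add: bij_def inj_eq)
next
  case (Rel r ts)
  then have "length ts = 2" "\<forall>t\<in>set ts. wf_trm Ost t" using Ost(2) by auto
  then obtain t1 t2 where ts: "ts = [t1, t2]" "wf_trm Ost t1" "wf_trm Ost t2"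
    by (cases ts; cases "tl ts") auto
  obtain i j where "t1 = Var i" "t2 = Var j" using ts wf_trm_nofun[OF Ost(1)] by blast
  then show ?case using ts Ost(3) g(2) by simp
next
  case (Neg \<phi>)
  have "sat Ost (g \<circ> w) \<phi> = sat Ost w \<phi>" by (rule Neg.IH) (use Neg.prems in simp)
  then show ?case by (simp only: sat.simps)
next
  case (Conj \<phi> \<psi>)
  have "sat Ost (g \<circ> w) \<phi> = sat Ost w \<phi>" by (rule Conj.IH(1)) (use Conj.prems in simp)
  moreover have "sat Ost (g \<circ> w) \<psi> = sat Ost w \<psi>" by (rule Conj.IH(2)) (use Conj.prems in simp)
  ultimately show ?case by (simp only: sat.simps)
next
  case (Ex x \<phi>)
  have wf: "wf_fm Ost \<phi>" using Ex.prems by simp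
  have e: "(g \<circ> w)(x := g a) = g \<circ> (w(x := a))" for a by (auto simp: fun_eq_iff)
  have "(\<exists>a. sat Ost ((g \<circ> w)(x := a)) \<phi>) \<longleftrightarrow> (\<exists>a. sat Ost ((g \<circ> w)(x := g a)) \<phi>)"
    using g(1) by (metis bij_pointE)
  also have "\<dots> \<longleftrightarrow> (\<exists>a. sat Ost (w(x := a)) \<phi>)" unfolding e by (intro ex_cong1, rule Ex.IH[OF wf])
  finally show ?case by (simp only: sat.simps)
qed simp

lemma concat_nth_block: "(\<And>y. length (\<tau> y) = m) \<Longrightarrow> i < length ys \<Longrightarrow> l < m \<Longrightarrow>
   concat (map \<tau> ys) ! (i * m + l) = \<tau> (ys ! i) ! l"
proof (induction ys arbitrary: i)
  case (Cons y ys)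
  show ?case
  proof (cases i)
    case 0 then show ?thesis using Cons by (simp add: nth_append)
  next
    case (Suc i')
    have "concat (map \<tau> (y # ys)) ! (i * m + l) = concat (map \<tau> ys) ! (i' * m + l)"
      using Cons.prems Suc by (simp add: nth_append)
    then show ?thesis using Cons Suc by simp
  qed
qed simp

lemma concat_len: "(\<And>y. length (\<tau> y) = m) \<Longrightarrow> length (concat (map \<tau> ys)) = m * length ys"
  by (induction ys) auto

lemma dfn0_sub_iff:
  fixes S :: "('a,'f,'r,'z) struc_scheme"
  assumes Z: "dfn0 S k Z" and \<sigma>: "\<And>l. l < k \<Longrightarrow> \<sigma> l < N"
  shows "dfn0 S N {ws. length ws = N \<and> (map (\<lambda>l. ws ! \<sigma> l) [0..<k] \<in> Z \<longleftrightarrow> b)}"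
proof (cases b)
  case True
  then show ?thesis using dfn0_sub[OF Z \<sigma>] by simp
next
  case False
  have "{ws. length ws = N \<and> (map (\<lambda>l. ws ! \<sigma> l) [0..<k] \<in> Z \<longleftrightarrow> b)} =
    {ws. length ws = N \<and> ws \<notin> {ws. length ws = N \<and> map (\<lambda>l. ws ! \<sigma> l) [0..<k] \<in> Z}}"
    using False by auto
  then show ?thesis using dfn0_compl[OF dfn0_sub[OF Z \<sigma>]] by simp
qed

lemma trace_lemma:
  fixes M :: "('a,'f,'r) struc" and Ost :: "('b, 'g, unit) struc" and \<tau> :: "'b \<Rightarrow> 'a list"
  assumes Ost: "fsyms Ost = {}" "rarity Ost () = 2" "\<And>xs. rinterp Ost () xs = Rb (xs!0) (xs!1)"
  and hom: "\<And>A f. finite A \<Longrightarrow> inj_on f A \<Longrightarrow> (\<forall>x\<in>A. \<forall>y\<in>A. Rb x y \<longleftrightarrow> Rb (f x) (f y)) \<Longrightarrow>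
      \<exists>g. bij g \<and> (\<forall>x y. Rb x y \<longleftrightarrow> Rb (g x) (g y)) \<and> (\<forall>x\<in>A. g x = f x)"
  and inj: "inj \<tau>" and len: "\<And>b. length (\<tau> b) = m"
  and Z: "dfn0 M (2*m) Z" and RZ: "\<And>u v. Rb u v \<longleftrightarrow> \<tau> u @ \<tau> v \<in> Z"
  shows "trace_defines_via M Ost m \<tau>"
  unfolding trace_defines_via_def
proof (intro conjI allI impI)
  show "inj \<tau>" by (rule inj)
  show "length (\<tau> b) = m" for b by (rule len)
  fix n X assume "definable Ost n X"
  then obtain \<theta> v where th: "wf_fm Ost \<theta>" "X = {xs. length xs = n \<and> sat Ost (asg xs v) \<theta>}"
    unfolding definable_def by blast
  obtain B where B: "fv \<theta> \<subseteq> {..<n+B}"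
    using finite_nat_bounded[OF finite_fv[of \<theta>]] by (metis le_add2 lessThan_subset_iff order_trans)
  define L where "L = n + B"
  define cs where "cs = map v [n..<n+B]"
  have lcs: "length cs = B" by (simp add: cs_def)
  define pat where "pat = (\<lambda>ys. map (\<lambda>k. (Rb (ys!(k div L)) (ys!(k mod L)), ys!(k div L) = ys!(k mod L))) [0..<L*L])"
  define \<sigma> where "\<sigma> = (\<lambda>i j l. if l < m then i*m+l else j*m + (l-m))"
  define pl where "pl = (\<lambda>(ws::'a list) i j. map (\<lambda>l. ws ! \<sigma> i j l) [0..<2*m])"
  define EqZ where "EqZ = {xs::'a list. length xs = 2*m \<and> take m xs = drop m xs}"
  define patM where "patM = (\<lambda>ws. map (\<lambda>k. (pl ws (k div L) (k mod L) \<in> Z, pl ws (k div L) (k mod L) \<in> EqZ)) [0..<L*L])"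
  have kL: "k div L < L" "k mod L < L" if "k < L*L" for k
    using that by (auto simp: less_mult_imp_div_less) (metis mod_less_divisor mult_0_right neq0_conv not_less0)
  have pat_nth: "pat ys ! (i*L + j) = (Rb (ys!i) (ys!j), ys!i = ys!j)" if "i < L" "j < L" for ys i j
  proof -
    have "i*L + j < L*L" using block_bound[OF that] by simp
    then show ?thesis unfolding pat_def using divmod_block[OF that(2), of i] by simp
  qed
  have pl_concat: "pl (concat (map \<tau> ys)) i j = \<tau> (ys!i) @ \<tau> (ys!j)" if "i < length ys" "j < length ys" for ys i j
    unfolding pl_def
  proof (rule nth_equalityI)
    show "length (map (\<lambda>l. concat (map \<tau> ys) ! \<sigma> i j l) [0..<2 * m]) = length (\<tau> (ys ! i) @ \<tau> (ys ! j))"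
      by (simp add: len)
    fix l assume "l < length (map (\<lambda>l. concat (map \<tau> ys) ! \<sigma> i j l) [0..<2 * m])"
    then have l: "l < 2*m" by simp
    show "map (\<lambda>l. concat (map \<tau> ys) ! \<sigma> i j l) [0..<2 * m] ! l = (\<tau> (ys ! i) @ \<tau> (ys ! j)) ! l"
    proof (cases "l < m")
      case True
      have "concat (map \<tau> ys) ! \<sigma> i j l = \<tau> (ys!i) ! l"
        unfolding \<sigma>_def using True concat_nth_block[of \<tau> m, OF len that(1) True] by simp
      then show ?thesis using l True by (simp add: nth_append len)
    next
      case False
      then have lm: "l - m < m" using l by simp
      have "concat (map \<tau> ys) ! \<sigma> i j l = \<tau> (ys!j) ! (l - m)"
        unfolding \<sigma>_def using False concat_nth_block[of \<tau> m, OF len that(2) lm] by simp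
      then show ?thesis using l False by (simp add: nth_append len)
    qed
  qed
  have patM_concat: "patM (concat (map \<tau> ys)) = pat ys" if "length ys = L" for ys
  proof -
    have "(pl (concat (map \<tau> ys)) (k div L) (k mod L) \<in> Z, pl (concat (map \<tau> ys)) (k div L) (k mod L) \<in> EqZ)
        = (Rb (ys!(k div L)) (ys!(k mod L)), ys!(k div L) = ys!(k mod L))" if "k < L*L" for k
    proof -
      have e: "pl (concat (map \<tau> ys)) (k div L) (k mod L) = \<tau> (ys!(k div L)) @ \<tau> (ys!(k mod L))"
        using pl_concat kL[OF that] \<open>length ys = L\<close> by simp
      have "\<tau> (ys!(k div L)) @ \<tau> (ys!(k mod L)) \<in> EqZ \<longleftrightarrow> ys!(k div L) = ys!(k mod L)"
        unfolding EqZ_def using len inj by (simp add: inj_eq)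
      then show ?thesis unfolding e using RZ by simp
    qed
    then show ?thesis unfolding patM_def pat_def by simp
  qed
  have claim1: "sat Ost (asg bs v) \<theta> \<Longrightarrow> sat Ost (asg bs' v) \<theta>"
    if lb: "length bs = n" "length bs' = n" and pe: "pat (bs @ cs) = pat (bs' @ cs)" for bs bs'
  proof -
    define ys where "ys = bs @ cs"
    define ys' where "ys' = bs' @ cs"
    have ly: "length ys = L" "length ys' = L" unfolding ys_def ys'_def L_def using lb lcs by simp_all
    have PR: "Rb (ys!i) (ys!j) = Rb (ys'!i) (ys'!j)" "(ys!i = ys!j) = (ys'!i = ys'!j)"
      if "i < L" "j < L" for i j
      using pe pat_nth[OF that, of ys] pat_nth[OF that, of ys'] unfolding ys_def ys'_def by simp_all
    define f where "f = (\<lambda>x. ys' ! (SOME i. i < L \<and> ys!i = x))"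
    have fys: "f (ys!i) = ys'!i" if "i < L" for i
    proof -
      have "\<exists>i'. i' < L \<and> ys!i' = ys!i" using that by blast
      then have s: "(SOME i'. i' < L \<and> ys!i' = ys!i) < L \<and> ys!(SOME i'. i' < L \<and> ys!i' = ys!i) = ys!i"
        by (rule someI_ex)
      then show ?thesis unfolding f_def using PR(2)[OF _ that] by blast
    qed
    have A: "\<exists>i<L. x = ys!i" if "x \<in> set ys" for x using that ly by (metis in_set_conv_nth)
    have "inj_on f (set ys)"
    proof (rule inj_onI)
      fix x y assume "x \<in> set ys" "y \<in> set ys" "f x = f y"
      then obtain i j where "i < L" "j < L" "x = ys!i" "y = ys!j" using A by blast
      then show "x = y" using \<open>f x = f y\<close> fys PR(2) by simp
    qed
    moreover have "\<forall>x\<in>set ys. \<forall>y\<in>set ys. Rb x y \<longleftrightarrow> Rb (f x) (f y)"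
    proof (intro ballI)
      fix x y assume "x \<in> set ys" "y \<in> set ys"
      then obtain i j where "i < L" "j < L" "x = ys!i" "y = ys!j" using A by blast
      then show "Rb x y \<longleftrightarrow> Rb (f x) (f y)" using fys PR(1) by simp
    qed
    ultimately obtain g where g: "bij g" "\<forall>x y. Rb x y \<longleftrightarrow> Rb (g x) (g y)" "\<forall>x\<in>set ys. g x = f x"
      using hom[of "set ys" f] by blast
    have gy: "g (ys!i) = ys'!i" if "i < L" for i
      using g(3) fys[OF that] that ly by simp
    have co: "sat Ost (asg bs' v) \<theta> = sat Ost (g \<circ> asg bs v) \<theta>"
    proof (rule sat_cong)
      fix i assume "i \<in> fv \<theta>"
      then have i: "i < L" using B unfolding L_def by auto
      show "asg bs' v i = (g \<circ> asg bs v) i"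
      proof (cases "i < n")
        case True
        then show ?thesis using gy[OF i] lb unfolding ys_def ys'_def by (simp add: asg_def nth_append)
      next
        case False
        then have "ys!i = v i" "ys'!i = v i" unfolding ys_def ys'_def cs_def using lb i
          by (simp_all add: nth_append L_def)
        then show ?thesis using gy[OF i] lb False by (simp add: asg_def)
      qed
    qed
    have "sat Ost (g \<circ> asg bs v) \<theta> = sat Ost (asg bs v) \<theta>"
      by (rule sat_aut[OF Ost g(1) _ th(1)]) (use g(2) in blast)
    then show "sat Ost (asg bs v) \<theta> \<Longrightarrow> sat Ost (asg bs' v) \<theta>" using co by simp
  qed
  define S\<pi> where "S\<pi> = (\<lambda>\<pi>. {ws. length ws = m*L \<and> patM ws = \<pi>})"
  have \<sigma>b: "\<sigma> i j l < m*L" if "i < L" "j < L" "l < 2*m" for i j l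
  proof (cases "l < m")
    case True then show ?thesis using block_bound[OF that(1) True] by (simp add: \<sigma>_def mult.commute)
  next
    case False then have lm: "l - m < m" using that by simp
    have "j * m + (l - m) < L * m" by (rule block_bound[OF that(2) lm])
    then show ?thesis using False by (simp add: \<sigma>_def mult.commute)
  qed
  have dEq: "dfn0 M (2*m) EqZ"
  proof -
    define E where "E = (\<lambda>l. {xs::'a list. length xs = 2*m \<and> map (\<lambda>t. xs ! (if t = 0 then l else m + l)) [0..<2] \<in> {xs. length xs = 2 \<and> xs ! 0 = xs ! 1}})"
    have dE: "dfn0 M (2*m) (E l)" if "l \<in> {..<m}" for l
      unfolding E_def by (rule dfn0_sub[OF dfn0_eq2]) (use that in auto)
    have "EqZ = {xs. length xs = 2*m} \<inter> (\<Inter>l\<in>{..<m}. E l)"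
    proof (intro set_eqI iffI)
      fix xs assume "xs \<in> EqZ"
      then have xs: "length xs = 2*m" "take m xs = drop m xs" unfolding EqZ_def by auto
      have "xs ! l = xs ! (m + l)" if "l < m" for l
        using arg_cong[OF xs(2), of "\<lambda>z. z ! l"] that xs(1) by simp
      then show "xs \<in> {xs. length xs = 2*m} \<inter> (\<Inter>l\<in>{..<m}. E l)"
        using xs(1) unfolding E_def by (auto simp: upt_rec)
    next
      fix xs assume a: "xs \<in> {xs. length xs = 2*m} \<inter> (\<Inter>l\<in>{..<m}. E l)"
      then have xs: "length xs = 2*m" by simp
      have "xs ! l = xs ! (m + l)" if "l < m" for l
        using a that unfolding E_def by (auto simp: upt_rec)
      then have "take m xs = drop m xs" using xs by (intro nth_equalityI) auto
      then show "xs \<in> EqZ" unfolding EqZ_def using xs by simp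
    qed
    then show ?thesis using dfn0_INT[of "{..<m}" M "2*m" E] dE by simp
  qed
  have dS: "dfn0 M (m*L) (S\<pi> \<pi>)" for \<pi>
  proof (cases "length \<pi> = L*L")
    case False
    then have "S\<pi> \<pi> = {}" unfolding S\<pi>_def patM_def by auto
    then show ?thesis using dfn0_empty by simp
  next
    case True
    define B1 where "B1 = (\<lambda>k. {ws. length ws = m*L \<and> (map (\<lambda>l. ws ! \<sigma> (k div L) (k mod L) l) [0..<2*m] \<in> Z \<longleftrightarrow> fst (\<pi>!k))})"
    define B2 where "B2 = (\<lambda>k. {ws. length ws = m*L \<and> (map (\<lambda>l. ws ! \<sigma> (k div L) (k mod L) l) [0..<2*m] \<in> EqZ \<longleftrightarrow> snd (\<pi>!k))})"
    have d12: "dfn0 M (m*L) (B1 k \<inter> B2 k)" if "k \<in> {..<L*L}" for k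
    proof -
      have kk: "k div L < L" "k mod L < L" using kL that by auto
      show ?thesis unfolding B1_def B2_def
        by (intro dfn0_Int dfn0_sub_iff[OF Z] dfn0_sub_iff[OF dEq]) (use \<sigma>b[OF kk] in auto)
    qed
    have "S\<pi> \<pi> = {ws. length ws = m*L} \<inter> (\<Inter>k\<in>{..<L*L}. B1 k \<inter> B2 k)"
    proof (intro set_eqI iffI)
      fix ws assume "ws \<in> S\<pi> \<pi>"
      then have ws: "length ws = m*L" "patM ws = \<pi>" unfolding S\<pi>_def by auto
      have "ws \<in> B1 k \<inter> B2 k" if "k < L*L" for k
      proof -
        have "\<pi> ! k = (pl ws (k div L) (k mod L) \<in> Z, pl ws (k div L) (k mod L) \<in> EqZ)"
          using ws(2) that unfolding patM_def by auto
        then show ?thesis using ws(1) unfolding B1_def B2_def pl_def by auto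
      qed
      then show "ws \<in> {ws. length ws = m*L} \<inter> (\<Inter>k\<in>{..<L*L}. B1 k \<inter> B2 k)" using ws(1) by auto
    next
      fix ws assume a: "ws \<in> {ws. length ws = m*L} \<inter> (\<Inter>k\<in>{..<L*L}. B1 k \<inter> B2 k)"
      then have ws: "length ws = m*L" by simp
      have "patM ws ! k = \<pi> ! k" if "k < L*L" for k
      proof -
        have "ws \<in> B1 k" "ws \<in> B2 k" using a that by auto
        then show ?thesis using that unfolding B1_def B2_def patM_def pl_def by (auto simp: prod_eq_iff)
      qed
      then have "patM ws = \<pi>" using True by (intro nth_equalityI) (auto simp: patM_def)
      then show "ws \<in> S\<pi> \<pi>" unfolding S\<pi>_def using ws by simp
    qed
    then show ?thesis using dfn0_INT[of "{..<L*L}" M "m*L" "\<lambda>k. B1 k \<inter> B2 k"] d12 by simp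
  qed
  define P where "P = (\<lambda>bs. pat (bs @ cs)) ` X"
  have finP: "finite P"
  proof (rule finite_subset)
    show "P \<subseteq> {xs. set xs \<subseteq> UNIV \<and> length xs = L*L}" unfolding P_def pat_def by auto
    show "finite {xs. set xs \<subseteq> (UNIV :: (bool \<times> bool) set) \<and> length xs = L*L}"
      by (rule finite_lists_length_eq) simp
  qed
  define Y' where "Y' = (\<Union>\<pi>\<in>P. S\<pi> \<pi>)"
  have dY': "dfn0 M (m*n + m*B) Y'"
    unfolding Y'_def using dfn0_UN[OF finP, of M "m*L" S\<pi>] dS by (simp add: L_def distrib_left)
  define ds where "ds = concat (map \<tau> cs)"
  have lds: "length ds = m*B" unfolding ds_def using concat_len[of \<tau> m cs] len lcs by simp
  define Y where "Y = {zs. zs @ ds \<in> Y'}"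
  have dY: "definable M (m*n) Y" unfolding Y_def by (rule dfn0_fix[OF dY' lds])
  have "X = {bs. length bs = n \<and> concat (map \<tau> bs) \<in> Y}"
  proof (intro set_eqI iffI)
    fix bs assume "bs \<in> X"
    then have lb: "length bs = n" using th(2) by simp
    have "concat (map \<tau> bs) @ ds = concat (map \<tau> (bs @ cs))" unfolding ds_def by simp
    moreover have "length (concat (map \<tau> (bs @ cs))) = m*L"
      using concat_len[of \<tau> m] len lb lcs by (simp add: L_def distrib_left)
    moreover have "patM (concat (map \<tau> (bs @ cs))) = pat (bs @ cs)"
      by (rule patM_concat) (simp add: lb lcs L_def)
    ultimately have "concat (map \<tau> bs) @ ds \<in> S\<pi> (pat (bs @ cs))" unfolding S\<pi>_def by simp
    moreover have "pat (bs @ cs) \<in> P" unfolding P_def using \<open>bs \<in> X\<close> by blast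
    ultimately show "bs \<in> {bs. length bs = n \<and> concat (map \<tau> bs) \<in> Y}"
      unfolding Y_def Y'_def using lb by blast
  next
    fix bs assume "bs \<in> {bs. length bs = n \<and> concat (map \<tau> bs) \<in> Y}"
    then have lb: "length bs = n" and "concat (map \<tau> bs) @ ds \<in> Y'" unfolding Y_def by auto
    then obtain bs0 where b0: "bs0 \<in> X" "concat (map \<tau> bs) @ ds \<in> S\<pi> (pat (bs0 @ cs))"
      unfolding Y'_def P_def by blast
    have "concat (map \<tau> bs) @ ds = concat (map \<tau> (bs @ cs))" unfolding ds_def by simp
    moreover have "patM (concat (map \<tau> (bs @ cs))) = pat (bs @ cs)"
      by (rule patM_concat) (simp add: lb lcs L_def)
    ultimately have pe: "pat (bs0 @ cs) = pat (bs @ cs)" using b0(2) unfolding S\<pi>_def by simp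
    have lb0: "length bs0 = n" and s0: "sat Ost (asg bs0 v) \<theta>" using b0(1) th(2) by auto
    have "sat Ost (asg bs v) \<theta>" by (rule claim1[OF lb0 lb pe s0])
    then show "bs \<in> X" using th(2) lb by simp
  qed
  then show "\<exists>Y. definable M (m * n) Y \<and> X = {bs. length bs = n \<and> concat (map \<tau> bs) \<in> Y}"
    using dY by blast
qed


lemma rat_between:
  fixes Lo Up :: "rat set"
  assumes fl: "finite Lo" and fu: "finite Up" and lu: "\<forall>l\<in>Lo. \<forall>u\<in>Up. l < u"
  shows "\<exists>y. (\<forall>l\<in>Lo. l < y) \<and> (\<forall>u\<in>Up. y < u)"
proof (cases "Lo = {}")
  case True
  show ?thesis
  proof (cases "Up = {}")
    case True then show ?thesis using \<open>Lo = {}\<close> by simp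
  next
    case False
    have "\<forall>u\<in>Up. Min Up - 1 < u"
    proof
      fix u assume "u \<in> Up"
      then have "Min Up \<le> u" using fu by simp
      then show "Min Up - 1 < u" by linarith
    qed
    then show ?thesis using \<open>Lo = {}\<close> by blast
  qed
next
  case False
  show ?thesis
  proof (cases "Up = {}")
    case True
    have "\<forall>l\<in>Lo. l < Max Lo + 1"
    proof
      fix l assume "l \<in> Lo"
      then have "l \<le> Max Lo" using fl by simp
      then show "l < Max Lo + 1" by linarith
    qed
    then show ?thesis using \<open>Up = {}\<close> by blast
  next
    case F2: False
    have "Max Lo \<in> Lo" "Min Up \<in> Up" using fl fu False F2 by simp_all
    then have lt: "Max Lo < Min Up" using lu by blast
    have "\<forall>l\<in>Lo. l < (Max Lo + Min Up) / 2"
    proof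
      fix l assume "l \<in> Lo"
      then have "l \<le> Max Lo" using fl by simp
      then have "2 * l < Max Lo + Min Up" using lt by linarith
      then show "l < (Max Lo + Min Up) / 2" by (simp add: field_simps)
    qed
    moreover have "\<forall>u\<in>Up. (Max Lo + Min Up) / 2 < u"
    proof
      fix u assume "u \<in> Up"
      then have "Min Up \<le> u" using fu by simp
      then have "Max Lo + Min Up < 2 * u" using lt by linarith
      then show "(Max Lo + Min Up) / 2 < u" by (simp add: field_simps)
    qed
    ultimately show ?thesis by blast
  qed
qed

interpretation rat_forth: forthR "(<) :: rat \<Rightarrow> rat \<Rightarrow> bool"
proof
  fix A and f :: "rat \<Rightarrow> rat" and x
  assume p: "piso (<) A f" and x: "x \<notin> A"
  have fin: "finite A" and inj: "inj_on f A" and pr: "\<forall>a\<in>A. \<forall>b\<in>A. a < b \<longleftrightarrow> f a < f b"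
    using p unfolding piso_def by auto
  obtain y where y: "\<forall>l\<in>f ` {a\<in>A. a < x}. l < y" "\<forall>u\<in>f ` {a\<in>A. x < a}. y < u"
  proof (atomize_elim, rule rat_between)
    show "finite (f ` {a \<in> A. a < x})" "finite (f ` {a \<in> A. x < a})" using fin by auto
    show "\<forall>l\<in>f ` {a \<in> A. a < x}. \<forall>u\<in>f ` {a \<in> A. x < a}. l < u"
    proof (intro ballI)
      fix l u assume "l \<in> f ` {a \<in> A. a < x}" "u \<in> f ` {a \<in> A. x < a}"
      then obtain a b where "a \<in> A" "b \<in> A" "a < x" "x < b" "l = f a" "u = f b" by blast
      then show "l < u" using pr by (meson less_trans)
    qed
  qed
  have ya: "(a < x \<longrightarrow> f a < y) \<and> (x < a \<longrightarrow> y < f a)" if "a \<in> A" for a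
    using y that by auto
  have "piso (<) (insert x A) (f(x := y))"
    unfolding piso_def
  proof (intro conjI)
    show "finite (insert x A)" using fin by simp
    show "inj_on (f(x := y)) (insert x A)"
    proof (rule inj_onI)
      fix a b assume ab: "a \<in> insert x A" "b \<in> insert x A" "(f(x := y)) a = (f(x := y)) b"
      show "a = b"
      proof (cases "a = x"; cases "b = x")
        assume "a = x" "b \<noteq> x"
        then have "b \<in> A" "y = f b" using ab by auto
        then show ?thesis using ya[of b] less_linear[of b x] \<open>b \<noteq> x\<close> by auto
      next
        assume "a \<noteq> x" "b = x"
        then have "a \<in> A" "f a = y" using ab by auto
        then show ?thesis using ya[of a] less_linear[of a x] \<open>a \<noteq> x\<close> by auto
      next
        assume "a \<noteq> x" "b \<noteq> x"
        then show ?thesis using ab inj by (auto simp: inj_on_def)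
      qed simp
    qed
    show "\<forall>a\<in>insert x A. \<forall>b\<in>insert x A. a < b \<longleftrightarrow> (f(x := y)) a < (f(x := y)) b"
    proof (intro ballI)
      fix a b assume ab: "a \<in> insert x A" "b \<in> insert x A"
      show "a < b \<longleftrightarrow> (f(x := y)) a < (f(x := y)) b"
      proof (cases "a = x"; cases "b = x")
        assume "a = x" "b \<noteq> x"
        then have "b \<in> A" using ab by auto
        then show ?thesis using ya[of b] less_linear[of b x] \<open>a = x\<close> \<open>b \<noteq> x\<close> by auto
      next
        assume "a \<noteq> x" "b = x"
        then have "a \<in> A" using ab by auto
        then show ?thesis using ya[of a] less_linear[of a x] \<open>a \<noteq> x\<close> \<open>b = x\<close> by auto
      next
        assume "a \<noteq> x" "b \<noteq> x"
        then show ?thesis using ab pr by auto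
      qed simp
    qed
  qed
  then show "\<exists>y. piso (<) (insert x A) (f(x := y))" by blast
qed

lemma rat_hom:
  fixes f :: "rat \<Rightarrow> rat"
  shows "finite A \<Longrightarrow> inj_on f A \<Longrightarrow> (\<forall>x\<in>A. \<forall>y\<in>A. x < y \<longleftrightarrow> f x < f y) \<Longrightarrow>
   \<exists>g. bij g \<and> (\<forall>x y. (x::rat) < y \<longleftrightarrow> g x < g y) \<and> (\<forall>x\<in>A. g x = f x)"
  using rat_forth.homog[of A f] unfolding piso_def by blast

lemma rank_less:
  fixes S :: "'b::linorder set"
  assumes "finite S" "x \<in> S" "y \<in> S"
  shows "card {s\<in>S. s < x} < card {s\<in>S. s < y} \<longleftrightarrow> x < y"
proof
  assume "x < y"
  then have "{s\<in>S. s < x} \<subset> {s\<in>S. s < y}" using assms by auto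
  then show "card {s\<in>S. s < x} < card {s\<in>S. s < y}" using assms(1) by (intro psubset_card_mono) auto
next
  assume a: "card {s\<in>S. s < x} < card {s\<in>S. s < y}"
  show "x < y"
  proof (rule ccontr)
    assume "\<not> x < y"
    then have "{s\<in>S. s < y} \<subseteq> {s\<in>S. s < x}" by auto
    then have "card {s\<in>S. s < y} \<le> card {s\<in>S. s < x}" using assms(1) by (intro card_mono) auto
    then show False using a by simp
  qed
qed

lemma rank_bound:
  fixes S :: "'b::linorder set"
  assumes "finite S" "x \<in> S"
  shows "card {s\<in>S. s < x} < card S"
  using assms by (intro psubset_card_mono) auto


lemma config_trace:
  fixes M :: "('a,'f,'r) struc" and Ost :: "('b,'g,unit) struc"
  assumes Ost: "fsyms Ost = {}" "rarity Ost () = 2" "\<And>xs. rinterp Ost () xs = Rb (xs!0) (xs!1)"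
  and hom: "\<And>A f. finite A \<Longrightarrow> inj_on f A \<Longrightarrow> (\<forall>x\<in>A. \<forall>y\<in>A. Rb x y \<longleftrightarrow> Rb (f x) (f y)) \<Longrightarrow>
      \<exists>g. bij g \<and> (\<forall>x y. Rb x y \<longleftrightarrow> Rb (g x) (g y)) \<and> (\<forall>x\<in>A. g x = f x)"
  and wf: "wf_fm M \<phi>" and fv: "fv \<phi> \<subseteq> {..<p+q}"
  and ab: "\<And>u. length (A u) = p \<and> length (B u) = q"
  and pat: "\<And>u v. sat M (asg (A u @ B v) (\<lambda>_. undefined)) \<phi> \<longleftrightarrow> Rb u v"
  and sep: "\<And>u v. u \<noteq> v \<Longrightarrow> \<exists>w. Rb u w \<noteq> Rb v w"
  shows "trace_defines M Ost"
proof -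
  define m where "m = p + q"
  define \<tau> where "\<tau> = (\<lambda>u. A u @ B u)"
  have len: "length (\<tau> u) = m" for u using ab[of u] by (simp add: \<tau>_def m_def)
  define \<sigma> where "\<sigma> = (\<lambda>l. if l < p then l else m + l)"
  define Z\<phi> where "Z\<phi> = {xs. length xs = m \<and> sat M (asg xs (\<lambda>_. undefined)) \<phi>}"
  have dZ\<phi>: "dfn0 M m Z\<phi>" unfolding Z\<phi>_def by (rule dfn0_formula[OF wf]) (use fv in \<open>simp add: m_def\<close>)
  define Z where "Z = {xs. length xs = 2*m \<and> map (\<lambda>l. xs ! \<sigma> l) [0..<m] \<in> Z\<phi>}"
  have dZ: "dfn0 M (2*m) Z" unfolding Z_def by (rule dfn0_sub[OF dZ\<phi>]) (auto simp: \<sigma>_def)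
  have mp: "map (\<lambda>l. (\<tau> u @ \<tau> v) ! \<sigma> l) [0..<m] = A u @ B v" for u v
  proof (rule nth_equalityI)
    show "length (map (\<lambda>l. (\<tau> u @ \<tau> v) ! \<sigma> l) [0..<m]) = length (A u @ B v)"
      using ab[of u] ab[of v] by (simp add: m_def)
    fix l assume "l < length (map (\<lambda>l. (\<tau> u @ \<tau> v) ! \<sigma> l) [0..<m])"
    then have l: "l < m" by simp
    show "map (\<lambda>l. (\<tau> u @ \<tau> v) ! \<sigma> l) [0..<m] ! l = (A u @ B v) ! l"
      using l ab[of u] ab[of v] len[of u] by (simp add: \<sigma>_def \<tau>_def nth_append m_def)
  qed
  have RZ: "Rb u v \<longleftrightarrow> \<tau> u @ \<tau> v \<in> Z" for u v
  proof -
    have "\<tau> u @ \<tau> v \<in> Z \<longleftrightarrow> A u @ B v \<in> Z\<phi>" unfolding Z_def using mp[of u v] len by simp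
    also have "\<dots> \<longleftrightarrow> Rb u v" unfolding Z\<phi>_def using pat[of u v] ab[of u] ab[of v] by (simp add: m_def)
    finally show ?thesis by simp
  qed
  have inj: "inj \<tau>"
  proof (rule injI)
    fix u v assume e: "\<tau> u = \<tau> v"
    have "A u = A v" using e ab[of u] ab[of v] unfolding \<tau>_def by simp
    then have "Rb u w = Rb v w" for w using pat[of u w] pat[of v w] by simp
    then show "u = v" using sep by blast
  qed
  have "trace_defines_via M Ost m \<tau>"
    by (rule trace_lemma[OF Ost hom inj len dZ RZ]) blast+
  then show ?thesis unfolding trace_defines_def by blast
qed

lemma trace_pattern:
  fixes M :: "('a,'f,'r) struc" and Ost :: "('b,'g,'s) struc"
  assumes tr: "trace_defines M Ost" and dR: "definable Ost 2 {xs. length xs = 2 \<and> Rb (xs!0) (xs!1)}"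
  shows "\<exists>\<theta> m ps \<tau>. wf_fm M \<theta> \<and> fv \<theta> \<subseteq> {..<m + (m + length ps)} \<and> (\<forall>u. length (\<tau> u) = m) \<and>
     (\<forall>u v. sat M (asg (\<tau> u @ (\<tau> v @ ps)) (\<lambda>_. undefined)) \<theta> \<longleftrightarrow> Rb u v)"
proof -
  obtain m \<tau> where t: "trace_defines_via M Ost m \<tau>" using tr unfolding trace_defines_def by blast
  then have len: "\<And>b. length (\<tau> b) = m" unfolding trace_defines_via_def by blast
  obtain Y where Y: "definable M (m*2) Y"
    "{xs. length xs = 2 \<and> Rb (xs!0) (xs!1)} = {bs. length bs = 2 \<and> concat (map \<tau> bs) \<in> Y}"
    using t dR unfolding trace_defines_via_def by blast
  obtain \<theta> v where th: "wf_fm M \<theta>" "Y = {xs. length xs = m*2 \<and> sat M (asg xs v) \<theta>}"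
    using Y(1) unfolding definable_def by blast
  obtain B where B: "fv \<theta> \<subseteq> {..<2*m+B}"
    using finite_nat_bounded[OF finite_fv[of \<theta>]] by (metis le_add2 lessThan_subset_iff order_trans)
  define ps where "ps = map v [2*m..<2*m+B]"
  have "sat M (asg (\<tau> u @ (\<tau> v' @ ps)) (\<lambda>_. undefined)) \<theta> \<longleftrightarrow> Rb u v'" for u v'
  proof -
    have "Rb u v' \<longleftrightarrow> [u, v'] \<in> {xs. length xs = 2 \<and> Rb (xs!0) (xs!1)}" by simp
    also have "\<dots> \<longleftrightarrow> \<tau> u @ \<tau> v' \<in> Y" unfolding Y(2) by simp
    also have "\<dots> \<longleftrightarrow> sat M (asg (\<tau> u @ \<tau> v') v) \<theta>" unfolding th(2) using len by simp
    also have "\<dots> \<longleftrightarrow> sat M (asg (\<tau> u @ (\<tau> v' @ ps)) (\<lambda>_. undefined)) \<theta>"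
    proof (rule sat_cong)
      fix i assume "i \<in> fv \<theta>"
      then have i: "i < 2*m+B" using B by auto
      show "asg (\<tau> u @ \<tau> v') v i = asg (\<tau> u @ (\<tau> v' @ ps)) (\<lambda>_. undefined) i"
        using i len[of u] len[of v'] by (auto simp: asg_def nth_append ps_def)
    qed
    finally show ?thesis by simp
  qed
  moreover have "fv \<theta> \<subseteq> {..<m + (m + length ps)}" using B by (auto simp: ps_def)
  ultimately show ?thesis using th(1) len by blast
qed

lemma rat_def_less: "definable rat_order 2 {xs. length xs = 2 \<and> xs!0 < xs!1}"
  unfolding definable_def
proof (intro exI conjI)
  show "wf_fm rat_order (Rel () [Var 0, Var 1])" by (simp add: rat_order_def)
  show "{xs. length xs = 2 \<and> xs!0 < xs!1} =
    {xs. length xs = 2 \<and> sat rat_order (asg xs (\<lambda>_. 0)) (Rel () [Var 0, Var 1])}"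
    by (auto simp: rat_order_def asg_def)
qed

lemma graph_def_E: "definable (graph_struc E) 2 {xs. length xs = 2 \<and> E (xs!0) (xs!1)}"
  unfolding definable_def
proof (intro exI conjI)
  show "wf_fm (graph_struc E) (Rel () [Var 0, Var 1])" by (simp add: graph_struc_def)
  show "{xs. length xs = 2 \<and> E (xs!0) (xs!1)} =
    {xs. length xs = 2 \<and> sat (graph_struc E) (asg xs (\<lambda>_. 0)) (Rel () [Var 0, Var 1])}"
    by (auto simp: graph_struc_def asg_def)
qed


definition E_rado :: "nat \<Rightarrow> nat \<Rightarrow> bool" where
  "E_rado x y \<longleftrightarrow> bit x y \<or> bit y x"

lemma bit_imp_less: "bit (a::nat) n \<Longrightarrow> n < a"
proof -
  assume "bit a n"
  then have "odd (a div 2 ^ n)" by (simp add: bit_iff_odd)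
  then have "a div 2 ^ n \<noteq> 0" by (metis even_zero)
  then have "2 ^ n \<le> a" by (simp add: div_eq_0_iff)
  moreover have "n < 2 ^ n" by (rule less_exp)
  ultimately show ?thesis by linarith
qed

definition bits :: "nat list \<Rightarrow> nat" where
  "bits us = foldr set_bit us 0"

lemma bit_bits: "bit (bits us) i \<longleftrightarrow> i \<in> set us"
  by (induction us) (auto simp: bits_def bit_set_bit_iff)

lemma rado_ext:
  assumes "finite U" "finite V" "finite W" "U \<inter> V = {}"
  shows "\<exists>z. z \<notin> W \<and> (\<forall>u\<in>U. E_rado u z) \<and> (\<forall>v\<in>V. \<not> E_rado v z)"
proof -
  obtain Z where Z: "\<forall>x\<in>U \<union> V \<union> W. x < Z"
    using finite_nat_bounded[of "U \<union> V \<union> W"] assms(1-3) by auto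
  obtain us where us: "set us = insert Z U" using assms(1) finite_list by (metis finite_insert)
  define z where "z = bits us"
  have bz: "bit z i \<longleftrightarrow> i = Z \<or> i \<in> U" for i unfolding z_def using bit_bits us by simp
  have Zz: "Z < z" using bit_imp_less bz by blast
  have nb: "\<not> bit x z" if "x \<in> U \<union> V \<union> W" for x
    using bit_imp_less Z that Zz by (meson less_trans not_less_iff_gr_or_eq)
  show ?thesis
  proof (intro exI conjI ballI)
    show "z \<notin> W"
    proof
      assume "z \<in> W" then have "z < Z" using Z by blast
      then show False using Zz by simp
    qed
    fix u assume "u \<in> U" then show "E_rado u z" unfolding E_rado_def using bz by simp
  next
    fix v assume v: "v \<in> V"
    have "v \<noteq> Z" using Z v by auto
    moreover have "v \<notin> U" using v assms(4) by auto
    ultimately show "\<not> E_rado v z" unfolding E_rado_def using bz nb v by auto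
  qed
qed

lemma rado_sym: "E_rado x y \<Longrightarrow> E_rado y x" unfolding E_rado_def by blast
lemma rado_irrefl: "\<not> E_rado x x" unfolding E_rado_def using bit_imp_less by blast

lemma rado_extend:
  assumes inj: "inj_on f S" and fin: "finite S" and x: "x \<notin> S"
  and pres: "\<forall>a\<in>S. \<forall>b\<in>S. G a b \<longleftrightarrow> E_rado (f a) (f b)"
  and sym: "\<And>a. a \<in> S \<Longrightarrow> G a x \<longleftrightarrow> G x a" and irr: "\<not> G x x"
  shows "\<exists>z. inj_on (f(x:=z)) (insert x S) \<and>
     (\<forall>a\<in>insert x S. \<forall>b\<in>insert x S. G a b \<longleftrightarrow> E_rado ((f(x:=z)) a) ((f(x:=z)) b))"
proof -
  have "f ` {s\<in>S. G s x} \<inter> f ` {s\<in>S. \<not> G s x} = {}"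
    using inj by (auto simp: inj_on_def)
  then have "\<exists>z. z \<notin> f ` S \<and> (\<forall>u\<in>f ` {s\<in>S. G s x}. E_rado u z) \<and> (\<forall>v\<in>f ` {s\<in>S. \<not> G s x}. \<not> E_rado v z)"
    by (intro rado_ext) (use fin in simp_all)
  then obtain z where z: "z \<notin> f ` S" "\<forall>u\<in>f ` {s\<in>S. G s x}. E_rado u z" "\<forall>v\<in>f ` {s\<in>S. \<not> G s x}. \<not> E_rado v z"
    by blast
  have zs: "G s x \<longleftrightarrow> E_rado (f s) z" if "s \<in> S" for s
    using z(2,3) that by auto
  show ?thesis
  proof (intro exI conjI)
    show "inj_on (f(x := z)) (insert x S)"
      using inj z(1) x by (auto simp: inj_on_def)
    show "\<forall>a\<in>insert x S. \<forall>b\<in>insert x S. G a b \<longleftrightarrow> E_rado ((f(x:=z)) a) ((f(x:=z)) b)"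
    proof (intro ballI)
      fix a b assume a: "a \<in> insert x S" and b: "b \<in> insert x S"
      show "G a b \<longleftrightarrow> E_rado ((f(x:=z)) a) ((f(x:=z)) b)"
      proof (cases "a = x"; cases "b = x")
        assume "a = x" "b = x" then show ?thesis using irr rado_irrefl by simp
      next
        assume ab: "a = x" "b \<noteq> x"
        then have "b \<in> S" using b by simp
        have "E_rado (f b) z \<longleftrightarrow> E_rado z (f b)" using rado_sym by blast
        then show ?thesis using ab x zs[of b] sym[of b] \<open>b \<in> S\<close> by auto
      next
        assume ab: "a \<noteq> x" "b = x"
        then have "a \<in> S" using a by simp
        then show ?thesis using ab x zs[of a] by auto
      next
        assume ab: "a \<noteq> x" "b \<noteq> x"
        then show ?thesis using a b pres by auto
      qed
    qed
  qed
qed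

interpretation rado_forth: forthR E_rado
proof
  fix A f x assume p: "piso E_rado A f" and x: "x \<notin> A"
  have "\<exists>z. inj_on (f(x:=z)) (insert x A) \<and>
     (\<forall>a\<in>insert x A. \<forall>b\<in>insert x A. E_rado a b \<longleftrightarrow> E_rado ((f(x:=z)) a) ((f(x:=z)) b))"
  proof (rule rado_extend)
    show "inj_on f A" "finite A" "\<forall>a\<in>A. \<forall>b\<in>A. E_rado a b \<longleftrightarrow> E_rado (f a) (f b)"
      using p unfolding piso_def by auto
    show "x \<notin> A" by (rule x)
    show "\<And>a. a \<in> A \<Longrightarrow> E_rado a x \<longleftrightarrow> E_rado x a" using rado_sym by blast
    show "\<not> E_rado x x" by (rule rado_irrefl)
  qed
  then obtain z where z: "inj_on (f(x:=z)) (insert x A)"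
     "\<forall>a\<in>insert x A. \<forall>b\<in>insert x A. E_rado a b \<longleftrightarrow> E_rado ((f(x:=z)) a) ((f(x:=z)) b)" by blast
  have "finite (insert x A)" using p unfolding piso_def by simp
  then have "piso E_rado (insert x A) (f(x := z))" using z unfolding piso_def by blast
  then show "\<exists>y. piso E_rado (insert x A) (f(x := y))" by blast
qed

lemma rado_univ: "finite S \<Longrightarrow> (\<forall>x\<in>S. \<forall>y\<in>S. G x y \<longrightarrow> G y x) \<Longrightarrow> (\<forall>x\<in>S. \<not> G x x) \<Longrightarrow>
   \<exists>f. inj_on f S \<and> (\<forall>x\<in>S. \<forall>y\<in>S. G x y \<longleftrightarrow> E_rado (f x) (f y))"
proof (induction S rule: finite_induct)
  case empty then show ?case by simp
next
  case (insert x S)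
  have p1: "\<forall>a\<in>S. \<forall>b\<in>S. G a b \<longrightarrow> G b a" using insert.prems(1) by blast
  have p2: "\<forall>a\<in>S. \<not> G a a" using insert.prems(2) by blast
  obtain f where f: "inj_on f S" "\<forall>a\<in>S. \<forall>b\<in>S. G a b \<longleftrightarrow> E_rado (f a) (f b)"
    using insert.IH[OF p1 p2] by blast
  have sy: "\<And>a. a \<in> S \<Longrightarrow> G a x \<longleftrightarrow> G x a" using insert.prems(1) by blast
  have ir: "\<not> G x x" using insert.prems(2) by blast
  have "\<exists>z. inj_on (f(x:=z)) (insert x S) \<and>
     (\<forall>a\<in>insert x S. \<forall>b\<in>insert x S. G a b \<longleftrightarrow> E_rado ((f(x:=z)) a) ((f(x:=z)) b))"
    by (rule rado_extend[OF f(1) insert(1,2) f(2) sy ir])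
  then show ?case by blast
qed

lemma rado_random: "is_random_graph E_rado"
  unfolding is_random_graph_def
proof (intro conjI allI impI)
  show "E_rado x y \<Longrightarrow> E_rado y x" for x y by (rule rado_sym)
  show "\<not> E_rado x x" for x by (rule rado_irrefl)
  show "\<exists>f. inj_on f S \<and> (\<forall>x\<in>S. \<forall>y\<in>S. G x y = E_rado (f x) (f y))"
    if "finite S" "\<forall>x\<in>S. \<forall>y\<in>S. G x y \<longrightarrow> G y x" "\<forall>x\<in>S. \<not> G x x" for S G
    using rado_univ that by blast
  show "\<exists>g. bij g \<and> (\<forall>x y. E_rado x y = E_rado (g x) (g y)) \<and> (\<forall>x\<in>A. g x = f x)"
    if "finite A" "inj_on f A" "\<forall>x\<in>A. \<forall>y\<in>A. E_rado x y = E_rado (f x) (f y)" for A f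
    using rado_forth.homog[of A f] that unfolding piso_def by blast
qed


lemma rg_ext:
  assumes rg: "is_random_graph E" and fU: "finite U" and fV: "finite V" and UV: "U \<inter> V = {}"
  shows "\<exists>z. (\<forall>u\<in>U. E u z) \<and> (\<forall>v\<in>V. \<not> E v z)"
proof -
  have rgd: "(\<forall>x y. E x y \<longrightarrow> E y x) \<and> (\<forall>x. \<not> E x x) \<and>
     (\<forall>(S :: nat set) G. finite S \<longrightarrow>
        (\<forall>x\<in>S. \<forall>y\<in>S. G x y \<longrightarrow> G y x) \<longrightarrow> (\<forall>x\<in>S. \<not> G x x) \<longrightarrow>
        (\<exists>f. inj_on f S \<and> (\<forall>x\<in>S. \<forall>y\<in>S. G x y \<longleftrightarrow> E (f x) (f y)))) \<and>
     (\<forall>A f. finite A \<longrightarrow> inj_on f A \<longrightarrow> (\<forall>x\<in>A. \<forall>y\<in>A. E x y \<longleftrightarrow> E (f x) (f y)) \<longrightarrow>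
        (\<exists>g. bij g \<and> (\<forall>x y. E x y \<longleftrightarrow> E (g x) (g y)) \<and> (\<forall>x\<in>A. g x = f x)))"
    using rg unfolding is_random_graph_def .
  have sym: "\<And>x y. E x y \<Longrightarrow> E y x" using rgd[THEN conjunct1] by blast
  have irr: "\<And>x. \<not> E x x" using rgd[THEN conjunct2, THEN conjunct1] by blast
  have univ: "\<forall>(S :: nat set) G. finite S \<longrightarrow>
        (\<forall>x\<in>S. \<forall>y\<in>S. G x y \<longrightarrow> G y x) \<longrightarrow> (\<forall>x\<in>S. \<not> G x x) \<longrightarrow>
        (\<exists>f. inj_on f S \<and> (\<forall>x\<in>S. \<forall>y\<in>S. G x y \<longleftrightarrow> E (f x) (f y)))"
    using rgd[THEN conjunct2, THEN conjunct2, THEN conjunct1] .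
  have hom: "\<forall>A f. finite A \<longrightarrow> inj_on f A \<longrightarrow> (\<forall>x\<in>A. \<forall>y\<in>A. E x y \<longleftrightarrow> E (f x) (f y)) \<longrightarrow>
        (\<exists>g. bij g \<and> (\<forall>x y. E x y \<longleftrightarrow> E (g x) (g y)) \<and> (\<forall>x\<in>A. g x = f x))"
    using rgd[THEN conjunct2, THEN conjunct2, THEN conjunct2] .
  define T where "T = U \<union> V"
  have fT: "finite T" unfolding T_def using fU fV by simp
  obtain z0 :: nat where z0: "z0 \<notin> T" using ex_new_if_finite[OF infinite_UNIV_nat fT] by blast
  define G where "G = (\<lambda>x y. (x \<in> T \<and> y \<in> T \<and> E x y) \<or> (x = z0 \<and> y \<in> U) \<or> (y = z0 \<and> x \<in> U))"
  have z0U: "z0 \<notin> U" using z0 unfolding T_def by blast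
  have h1: "\<forall>x\<in>insert z0 T. \<forall>y\<in>insert z0 T. G x y \<longrightarrow> G y x" unfolding G_def using sym by blast
  have h2: "\<forall>x\<in>insert z0 T. \<not> G x x" unfolding G_def using irr z0U by blast
  have fT': "finite (insert z0 T)" using fT by simp
  obtain f where f: "inj_on f (insert z0 T)" "\<forall>x\<in>insert z0 T. \<forall>y\<in>insert z0 T. G x y \<longleftrightarrow> E (f x) (f y)"
    using univ[THEN spec[of _ "insert z0 T"], THEN spec[of _ G], THEN mp, OF fT', THEN mp, OF h1, THEN mp, OF h2] by blast
  define h where "h = inv_into T f"
  have injT: "inj_on f T" using f(1) by (rule inj_on_subset) blast
  have hf: "h (f a) = a" if "a \<in> T" for a unfolding h_def using injT that by (simp add: inv_into_f_f)
  have "inj_on h (f ` T)" unfolding h_def by (rule inj_on_inv_into) simp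
  moreover have "\<forall>x\<in>f ` T. \<forall>y\<in>f ` T. E x y \<longleftrightarrow> E (h x) (h y)"
  proof (intro ballI)
    fix x y assume "x \<in> f ` T" "y \<in> f ` T"
    then obtain a b where ab: "a \<in> T" "b \<in> T" "x = f a" "y = f b" by blast
    have "E (f a) (f b) \<longleftrightarrow> G a b" using f(2) ab(1,2) by blast
    also have "\<dots> \<longleftrightarrow> E a b" unfolding G_def using ab(1,2) z0 by auto
    finally show "E x y \<longleftrightarrow> E (h x) (h y)" using ab hf by simp
  qed
  moreover have "finite (f ` T)" using fT by simp
  ultimately obtain g where g: "bij g" "\<forall>x y. E x y \<longleftrightarrow> E (g x) (g y)" "\<forall>x\<in>f ` T. g x = h x"
    using hom[THEN spec[of _ "f ` T"], THEN spec[of _ h]] by blast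
  have gfa: "g (f a) = a" if "a \<in> T" for a using g(3) hf that by auto
  define z where "z = g (f z0)"
  have Ez: "E a z \<longleftrightarrow> G a z0" if "a \<in> T" for a
  proof -
    have "E a z \<longleftrightarrow> E (g (f a)) (g (f z0))" unfolding z_def using gfa[OF that] by simp
    also have "\<dots> \<longleftrightarrow> E (f a) (f z0)" using g(2) by blast
    also have "\<dots> \<longleftrightarrow> G a z0" using f(2) that by blast
    finally show ?thesis .
  qed
  have "\<forall>u\<in>U. E u z" using Ez unfolding G_def T_def by blast
  moreover have "\<forall>v\<in>V. \<not> E v z"
  proof
    fix v assume v: "v \<in> V"
    then have "v \<in> T" "v \<noteq> z0" "v \<notin> U" using z0 UV unfolding T_def by auto
    then show "\<not> E v z" using Ez[of v] z0 unfolding G_def by auto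
  qed
  ultimately show ?thesis by blast
qed

lemma rat_shape: "fsyms rat_order = {}" "rarity rat_order () = 2"
  "\<And>xs. rinterp rat_order () xs = (xs!0 < xs!1)"
  by (simp_all add: rat_order_def)

lemma graph_shape: "fsyms (graph_struc E) = {}" "rarity (graph_struc E) () = 2"
  "\<And>xs. rinterp (graph_struc E) () xs = E (xs!0) (xs!1)"
  by (simp_all add: graph_struc_def)

lemma unstable_trace:
  fixes M :: "('a,'f,'r) struc"
  assumes sat: "aleph1_saturated M" and ns: "\<not> stable M"
  shows "trace_defines M rat_order"
proof -
  obtain \<phi> p q where \<phi>: "wf_fm M \<phi>" "fv \<phi> \<subseteq> {..<p+q}"
    and op: "\<forall>N. \<exists>(a :: nat \<Rightarrow> 'a list) (b :: nat \<Rightarrow> 'a list).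
          (\<forall>i. length (a i) = p \<and> length (b i) = q) \<and>
          (\<forall>i<N. \<forall>j<N. sat M (asg (a i @ b j) (\<lambda>_. undefined)) \<phi> \<longleftrightarrow> i < j)"
    using ns unfolding stable_def by blast
  define R where "R = (\<lambda>i j. (from_nat i :: rat) < from_nat j)"
  have fin: "\<exists>a b. (\<forall>i. length (a i) = p \<and> length (b i) = q) \<and>
      (\<forall>i<K. \<forall>j<K. sat M (asg (a i @ b j) (\<lambda>_. undefined)) \<phi> \<longleftrightarrow> R i j)" for K
  proof -
    obtain a' b' where ab': "\<forall>i. length (a' i) = p \<and> length (b' i) = q"
      "\<forall>i<K. \<forall>j<K. sat M (asg (a' i @ b' j) (\<lambda>_. undefined)) \<phi> \<longleftrightarrow> i < j"
      using op by blast
    define S where "S = (from_nat ` {..<K} :: rat set)"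
    have fS: "finite S" unfolding S_def by simp
    define \<rho> where "\<rho> = (\<lambda>r. card {s\<in>S. s < r})"
    have cS: "card S \<le> K" unfolding S_def using card_image_le[of "{..<K}" from_nat] by simp
    have \<rho>K: "\<rho> (from_nat i) < K" if "i < K" for i
    proof -
      have "from_nat i \<in> S" unfolding S_def using that by blast
      then show ?thesis using rank_bound[OF fS] cS unfolding \<rho>_def by (meson less_le_trans)
    qed
    show ?thesis
    proof (intro exI conjI)
      show "\<forall>i. length (a' (\<rho> (from_nat i))) = p \<and> length (b' (\<rho> (from_nat i))) = q" using ab'(1) by blast
      show "\<forall>i<K. \<forall>j<K. sat M (asg (a' (\<rho> (from_nat i)) @ b' (\<rho> (from_nat j))) (\<lambda>_. undefined)) \<phi> \<longleftrightarrow> R i j"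
      proof (intro allI impI)
        fix i j assume ij: "i < K" "j < K"
        have "from_nat i \<in> S" "from_nat j \<in> S" unfolding S_def using ij by auto
        then have "\<rho> (from_nat i) < \<rho> (from_nat j) \<longleftrightarrow> R i j"
          unfolding \<rho>_def R_def using rank_less[OF fS] by blast
        then show "sat M (asg (a' (\<rho> (from_nat i)) @ b' (\<rho> (from_nat j))) (\<lambda>_. undefined)) \<phi> \<longleftrightarrow> R i j"
          using ab'(2) \<rho>K[OF ij(1)] \<rho>K[OF ij(2)] by simp
      qed
    qed
  qed
  obtain a b where ab: "\<forall>i. length (a i) = p \<and> length (b i) = q"
    "\<forall>i j. sat M (asg (a i @ b j) (\<lambda>_. undefined)) \<phi> \<longleftrightarrow> R i j"
    using compact_config[OF sat \<phi>(1,2) fin] by blast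
  show ?thesis
  proof (rule config_trace[OF rat_shape rat_hom \<phi>(1,2)])
    show "\<And>u::rat. length (a (to_nat u)) = p \<and> length (b (to_nat u)) = q" using ab(1) by blast
    show "\<And>u v::rat. sat M (asg (a (to_nat u) @ b (to_nat v)) (\<lambda>_. undefined)) \<phi> \<longleftrightarrow> u < v"
      using ab(2) unfolding R_def by (simp add: from_nat_to_nat)
    show "\<And>u v::rat. u \<noteq> v \<Longrightarrow> \<exists>w. (u < w) \<noteq> (v < w)"
      by (metis less_irrefl linorder_neqE)
  qed auto
qed

lemma trace_unstable:
  fixes M :: "('a,'f,'r) struc"
  assumes tr: "trace_defines M rat_order"
  shows "\<not> stable M"
proof -
  obtain \<theta> m ps \<tau> where t: "wf_fm M \<theta>" "fv \<theta> \<subseteq> {..<m + (m + length ps)}" "\<forall>u. length (\<tau> u) = m"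
     "\<forall>u v. sat M (asg (\<tau> u @ (\<tau> v @ ps)) (\<lambda>_. undefined)) \<theta> \<longleftrightarrow> (u::rat) < v"
    using trace_pattern[OF tr rat_def_less] by blast
  show ?thesis unfolding stable_def
  proof (rule notI, erule notE, rule exI[of _ \<theta>], rule exI[of _ m], rule exI[of _ "m + length ps"], intro conjI allI)
    show "wf_fm M \<theta>" by (rule t(1))
    show "fv \<theta> \<subseteq> {..<m + (m + length ps)}" by (rule t(2))
    fix N
    show "\<exists>(a :: nat \<Rightarrow> 'a list) (b :: nat \<Rightarrow> 'a list). (\<forall>i. length (a i) = m \<and> length (b i) = m + length ps) \<and>
          (\<forall>i<N. \<forall>j<N. sat M (asg (a i @ b j) (\<lambda>_. undefined)) \<theta> \<longleftrightarrow> i < j)"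
      by (rule exI[of _ "\<lambda>i. \<tau> (of_nat i)"], rule exI[of _ "\<lambda>j. \<tau> (of_nat j) @ ps"]) (use t(3,4) in simp)
  qed
qed

lemma ip_trace:
  fixes M :: "('a,'f,'r) struc"
  assumes sat: "aleph1_saturated M" and ip: "has_IP M"
  shows "trace_defines M (graph_struc E_rado)"
proof -
  obtain \<phi> p q where \<phi>: "wf_fm M \<phi>" "fv \<phi> \<subseteq> {..<p+q}"
    and op: "\<forall>N. \<exists>(a :: nat \<Rightarrow> 'a list) (b :: nat set \<Rightarrow> 'a list).
          (\<forall>i. length (a i) = p) \<and> (\<forall>S. length (b S) = q) \<and>
          (\<forall>i<N. \<forall>S. S \<subseteq> {..<N} \<longrightarrow>
               (sat M (asg (a i @ b S) (\<lambda>_. undefined)) \<phi> \<longleftrightarrow> i \<in> S))"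
    using ip unfolding has_IP_def by (elim exE conjE) (rule that; assumption)
  have fin: "\<exists>a b. (\<forall>i. length (a i) = p \<and> length (b i) = q) \<and>
      (\<forall>i<K. \<forall>j<K. sat M (asg (a i @ b j) (\<lambda>_. undefined)) \<phi> \<longleftrightarrow> E_rado i j)" for K
  proof -
    obtain a' b' where ab': "\<forall>i. length (a' i) = p" "\<forall>S. length (b' S) = q"
      "\<forall>i<K. \<forall>S. S \<subseteq> {..<K} \<longrightarrow> (sat M (asg (a' i @ b' S) (\<lambda>_. undefined)) \<phi> \<longleftrightarrow> i \<in> S)"
      using op[THEN spec[of _ K]] by (elim exE conjE) (rule that; assumption)
    show ?thesis
    proof (intro exI conjI)
      show "\<forall>i. length (a' i) = p \<and> length (b' {u. u < K \<and> E_rado u i}) = q" using ab'(1,2) by blast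
      show "\<forall>i<K. \<forall>j<K. sat M (asg (a' i @ b' {u. u < K \<and> E_rado u j}) (\<lambda>_. undefined)) \<phi> \<longleftrightarrow> E_rado i j"
      proof (intro allI impI)
        fix i j assume ij: "i < K" "j < K"
        have sub: "{u. u < K \<and> E_rado u j} \<subseteq> {..<K}" by auto
        have "sat M (asg (a' i @ b' {u. u < K \<and> E_rado u j}) (\<lambda>_. undefined)) \<phi> \<longleftrightarrow> i \<in> {u. u < K \<and> E_rado u j}"
          using ab'(3) ij(1) sub by blast
        then show "sat M (asg (a' i @ b' {u. u < K \<and> E_rado u j}) (\<lambda>_. undefined)) \<phi> \<longleftrightarrow> E_rado i j"
          using ij(1) by simp
      qed
    qed
  qed
  obtain a b where ab: "\<forall>i. length (a i) = p \<and> length (b i) = q"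
    "\<forall>i j. sat M (asg (a i @ b j) (\<lambda>_. undefined)) \<phi> \<longleftrightarrow> E_rado i j"
    using compact_config[OF sat \<phi>(1,2) fin] by blast
  have hom: "\<And>A f. finite A \<Longrightarrow> inj_on f A \<Longrightarrow> (\<forall>x\<in>A. \<forall>y\<in>A. E_rado x y \<longleftrightarrow> E_rado (f x) (f y)) \<Longrightarrow>
      \<exists>g. bij g \<and> (\<forall>x y. E_rado x y \<longleftrightarrow> E_rado (g x) (g y)) \<and> (\<forall>x\<in>A. g x = f x)"
    by (rule rado_forth.homog) (simp add: piso_def)
  show ?thesis
  proof (rule config_trace[OF graph_shape hom \<phi>(1,2)])
    show "\<And>u. length (a u) = p \<and> length (b u) = q" using ab(1) by blast
    show "\<And>u v. sat M (asg (a u @ b v) (\<lambda>_. undefined)) \<phi> \<longleftrightarrow> E_rado u v" using ab(2) by blast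
    show "\<exists>w. E_rado u w \<noteq> E_rado v w" if "u \<noteq> v" for u v
    proof -
      have "\<exists>z. E_rado u z \<and> \<not> E_rado v z"
        using rado_ext[of "{u}" "{v}" "{}"] that by simp
      then show ?thesis by blast
    qed
  qed auto
qed

lemma trace_ip:
  fixes M :: "('a,'f,'r) struc"
  assumes rg: "is_random_graph E" and tr: "trace_defines M (graph_struc E)"
  shows "has_IP M"
proof -
  obtain \<theta> m ps \<tau> where t: "wf_fm M \<theta>" "fv \<theta> \<subseteq> {..<m + (m + length ps)}" "\<forall>u. length (\<tau> u) = m"
     "\<forall>u v. sat M (asg (\<tau> u @ (\<tau> v @ ps)) (\<lambda>_. undefined)) \<theta> \<longleftrightarrow> E u v"
    using trace_pattern[OF tr graph_def_E] by blast
  show ?thesis unfolding has_IP_def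
  proof (rule exI[of _ \<theta>], rule exI[of _ m], rule exI[of _ "m + length ps"], intro conjI allI)
    show "wf_fm M \<theta>" by (rule t(1))
    show "fv \<theta> \<subseteq> {..<m + (m + length ps)}" by (rule t(2))
    fix N
    define zf where "zf = (\<lambda>S. SOME z. (\<forall>u\<in>S \<inter> {..<N}. E u z) \<and> (\<forall>v\<in>{..<N} - S. \<not> E v z))"
    have zf: "(\<forall>u\<in>S \<inter> {..<N}. E u (zf S)) \<and> (\<forall>v\<in>{..<N} - S. \<not> E v (zf S))" for S
      unfolding zf_def by (rule someI_ex, rule rg_ext[OF rg]) auto
    show "\<exists>(a :: nat \<Rightarrow> 'a list) (b :: nat set \<Rightarrow> 'a list).
          (\<forall>i. length (a i) = m) \<and> (\<forall>S. length (b S) = m + length ps) \<and>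
          (\<forall>i<N. \<forall>S. S \<subseteq> {..<N} \<longrightarrow>
               (sat M (asg (a i @ b S) (\<lambda>_. undefined)) \<theta> \<longleftrightarrow> i \<in> S))"
    proof (rule exI[of _ "\<lambda>i. \<tau> i"], rule exI[of _ "\<lambda>S. \<tau> (zf S) @ ps"], intro conjI allI impI)
      show "length (\<tau> i) = m" for i using t(3) by blast
      show "length (\<tau> (zf S) @ ps) = m + length ps" for S using t(3) by simp
      fix i S assume i: "i < N" and S: "S \<subseteq> {..<N}"
      have "sat M (asg (\<tau> i @ (\<tau> (zf S) @ ps)) (\<lambda>_. undefined)) \<theta> \<longleftrightarrow> E i (zf S)" using t(4) by blast
      also have "\<dots> \<longleftrightarrow> i \<in> S" using zf[of S] i by blast
      finally show "sat M (asg (\<tau> i @ (\<tau> (zf S) @ ps)) (\<lambda>_. undefined)) \<theta> \<longleftrightarrow> i \<in> S" .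
    qed
  qed
qed

theorem proposition4p8:
  fixes M :: "('a, 'f, 'r) struc"
  assumes "aleph1_saturated M"
  shows "(\<not> stable M \<longleftrightarrow> trace_defines M rat_order) \<and>
         (has_IP M \<longleftrightarrow> (\<exists>E. is_random_graph E \<and> trace_defines M (graph_struc E)))"
proof (intro conjI iffI)
  show "trace_defines M rat_order" if "\<not> stable M" using unstable_trace[OF assms that] .
  show "\<not> stable M" if "trace_defines M rat_order" using trace_unstable[OF that] .
  show "\<exists>E. is_random_graph E \<and> trace_defines M (graph_struc E)" if "has_IP M"
    using rado_random ip_trace[OF assms that] by blast
  show "has_IP M" if "\<exists>E. is_random_graph E \<and> trace_defines M (graph_struc E)"
    using that trace_ip by blast
qed

end
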